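(* Let $(V_1, V_2)$ be a compact normal pair on $\mathcal{H}$ and $k := \dim E_1 \in \{0,1,\dots\}\cup\{\infty\}$. Then there exists an orthonormal basis $\{f_i\}_{i=1}^k$ of $E_1$ consisting of eigenvectors of $[V_2^*, V_1]$ such that, setting $\mathcal{H}_j := \overline{\operatorname{span}}\{V_1^m V_2^n f_j: m, n \geq 0\}$ for $1\le j\le k$ and $\mathcal{H}_0 := \mathcal{H}\ominus\bigoplus_{j=1}^k\mathcal{H}_j$: (1) each $\mathcal{H}_j$ ($0\le j\le k$) is a closed $(V_1,V_2)$-reducing subspace and $\mathcal{H} = \bigoplus_{j=0}^k \mathcal{H}_j$ (orthogonal sum); (2) for $1\le i\le k$, the pair $(V_{1,i}, V_{2,i}) := (V_1|_{\mathcal{H}_i}, V_2|_{\mathcal{H}_i})$ is irreducible; (3) $(V_{1,0}, V_{2,0}) := (V_1|_{\mathcal{H}_0}, V_2|_{\mathcal{H}_0})$ is a shift-unitary pair.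
   Context: All Hilbert spaces are complex and separable. An isometric pair is a pair $(V_1,V_2)$ of commuting isometries on $\mathcal{H}$. An isometry $V$ is a shift if $V^{*m}\to0$ strongly. A BCL pair is an isometric pair with $V_1V_2$ a shift. $[V_2^*,V_1] := V_2^*V_1 - V_1V_2^*$. A compact normal pair is a BCL pair with $[V_2^*,V_1]$ compact and normal. $C(V_1,V_2) := I - V_1V_1^* - V_2V_2^* + V_1V_2V_1^*V_2^*$ and $E_1 := \ker(C(V_1,V_2)-I)$. A subspace is $(V_1,V_2)$-reducing if invariant under $V_1,V_2,V_1^*,V_2^*$; a pair is irreducible if its only reducing subspaces are $\{0\}$ and the whole space. A shift-unitary pair is an isometric pair $(W_1,W_2)$ on $\mathcal{K}$ with $[W_2^*,W_1]=0$ such that $\mathcal{K}=\mathcal{K}_{us}\oplus\mathcal{K}_{su}$ with both summands reducing, $W_1$ unitary and $W_2$ a shift on $\mathcal{K}_{us}$, $W_1$ a shift and $W_2$ unitary on $\mathcal{K}_{su}$ (summands may be zero). *)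

theory Defs
  imports "HOL-Analysis.Analysis"
begin

text \<open>A complex Hilbert space is modelled as a real Hilbert space (real inner product,
complete) carrying a complex scalar multiplication extending the real one, such that
multiplication by the imaginary unit is orthogonal. The complex inner product is then
recovered as cinner below (linear in the first, conjugate-linear in the second argument).
Separability is second countability of the norm topology.\<close>

class chilbert_space = real_inner + complete_space + second_countable_topology +
  fixes cscale :: "complex \<Rightarrow> 'a \<Rightarrow> 'a"
  assumes cscale_add_right: "cscale a (x + y) = cscale a x + cscale a y"
    and cscale_add_left: "cscale (a + b) x = cscale a x + cscale b x"
    and cscale_cscale: "cscale a (cscale b x) = cscale (a * b) x"
    and cscale_of_real: "cscale (complex_of_real r) x = r *\<^sub>R x"
    and inner_cscale_ii: "inner (cscale \<i> x) (cscale \<i> y) = inner x y"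

definition cinner :: "'a::chilbert_space \<Rightarrow> 'a \<Rightarrow> complex" where
  "cinner x y = Complex (inner x y) (inner x (cscale \<i> y))"

definition clinear_op :: "('a::chilbert_space \<Rightarrow> 'a) \<Rightarrow> bool" where
  "clinear_op T \<longleftrightarrow> bounded_linear T \<and> (\<forall>c x. T (cscale c x) = cscale c (T x))"

definition adj :: "('a::chilbert_space \<Rightarrow> 'a) \<Rightarrow> ('a \<Rightarrow> 'a)" where
  "adj T = (THE S. \<forall>x y. cinner (T x) y = cinner x (S y))"

definition is_isometry :: "('a::chilbert_space \<Rightarrow> 'a) \<Rightarrow> bool" where
  "is_isometry V \<longleftrightarrow> clinear_op V \<and> (\<forall>x. norm (V x) = norm x)"

definition is_shift :: "('a::chilbert_space \<Rightarrow> 'a) \<Rightarrow> bool" where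
  "is_shift V \<longleftrightarrow> is_isometry V \<and> (\<forall>x. (\<lambda>m. (adj V ^^ m) x) \<longlonglongrightarrow> 0)"

definition isometric_pair :: "('a::chilbert_space \<Rightarrow> 'a) \<Rightarrow> ('a \<Rightarrow> 'a) \<Rightarrow> bool" where
  "isometric_pair V1 V2 \<longleftrightarrow> is_isometry V1 \<and> is_isometry V2 \<and> V1 \<circ> V2 = V2 \<circ> V1"

definition bcl_pair :: "('a::chilbert_space \<Rightarrow> 'a) \<Rightarrow> ('a \<Rightarrow> 'a) \<Rightarrow> bool" where
  "bcl_pair V1 V2 \<longleftrightarrow> isometric_pair V1 V2 \<and> is_shift (V1 \<circ> V2)"

definition commut :: "('a::chilbert_space \<Rightarrow> 'a) \<Rightarrow> ('a \<Rightarrow> 'a) \<Rightarrow> 'a \<Rightarrow> 'a" where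
  "commut V1 V2 = (\<lambda>x. adj V2 (V1 x) - V1 (adj V2 x))"

definition compact_op :: "('a::chilbert_space \<Rightarrow> 'a) \<Rightarrow> bool" where
  "compact_op T \<longleftrightarrow> clinear_op T \<and> compact (closure (T ` ball 0 1))"

definition normal_op :: "('a::chilbert_space \<Rightarrow> 'a) \<Rightarrow> bool" where
  "normal_op T \<longleftrightarrow> clinear_op T \<and> T \<circ> adj T = adj T \<circ> T"

definition compact_normal_pair :: "('a::chilbert_space \<Rightarrow> 'a) \<Rightarrow> ('a \<Rightarrow> 'a) \<Rightarrow> bool" where
  "compact_normal_pair V1 V2 \<longleftrightarrow> bcl_pair V1 V2 \<and> compact_op (commut V1 V2) \<and> normal_op (commut V1 V2)"

definition defect_op :: "('a::chilbert_space \<Rightarrow> 'a) \<Rightarrow> ('a \<Rightarrow> 'a) \<Rightarrow> 'a \<Rightarrow> 'a" where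
  "defect_op V1 V2 = (\<lambda>x. x - V1 (adj V1 x) - V2 (adj V2 x) + V1 (V2 (adj V1 (adj V2 x))))"

definition E1 :: "('a::chilbert_space \<Rightarrow> 'a) \<Rightarrow> ('a \<Rightarrow> 'a) \<Rightarrow> 'a set" where
  "E1 V1 V2 = {x. defect_op V1 V2 x - x = 0}"

definition csubspace :: "'a::chilbert_space set \<Rightarrow> bool" where
  "csubspace S \<longleftrightarrow> 0 \<in> S \<and> (\<forall>x\<in>S. \<forall>y\<in>S. x + y \<in> S) \<and> (\<forall>c. \<forall>x\<in>S. cscale c x \<in> S)"

definition closed_csubspace :: "'a::chilbert_space set \<Rightarrow> bool" where
  "closed_csubspace S \<longleftrightarrow> csubspace S \<and> closed S"

definition cspan :: "'a::chilbert_space set \<Rightarrow> 'a set" where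
  "cspan S = \<Inter>{T. csubspace T \<and> S \<subseteq> T}"

definition orth_compl :: "'a::chilbert_space set \<Rightarrow> 'a set" where
  "orth_compl S = {x. \<forall>y\<in>S. cinner x y = 0}"

definition orthonormal_basis_of :: "'a::chilbert_space set \<Rightarrow> 'a set \<Rightarrow> bool" where
  "orthonormal_basis_of F E \<longleftrightarrow> F \<subseteq> E \<and> (\<forall>f\<in>F. norm f = 1)
     \<and> (\<forall>f\<in>F. \<forall>g\<in>F. f \<noteq> g \<longrightarrow> cinner f g = 0) \<and> closure (cspan F) = E"

definition reducing :: "('a::chilbert_space \<Rightarrow> 'a) \<Rightarrow> ('a \<Rightarrow> 'a) \<Rightarrow> 'a set \<Rightarrow> bool" where
  "reducing V1 V2 M \<longleftrightarrow> closed_csubspace M \<and> V1 ` M \<subseteq> M \<and> V2 ` M \<subseteq> M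
     \<and> adj V1 ` M \<subseteq> M \<and> adj V2 ` M \<subseteq> M"

text \<open>Irreducibility of the restricted pair (V1|M, V2|M) for a reducing subspace M:
the reducing subspaces of the restriction are exactly the reducing subspaces of
(V1,V2) contained in M (since (Vi|M)* = Vi*|M).\<close>
definition irreducible_on :: "('a::chilbert_space \<Rightarrow> 'a) \<Rightarrow> ('a \<Rightarrow> 'a) \<Rightarrow> 'a set \<Rightarrow> bool" where
  "irreducible_on V1 V2 M \<longleftrightarrow> (\<forall>N. N \<subseteq> M \<longrightarrow> reducing V1 V2 N \<longrightarrow> N = {0} \<or> N = M)"

definition gen_subspace :: "('a::chilbert_space \<Rightarrow> 'a) \<Rightarrow> ('a \<Rightarrow> 'a) \<Rightarrow> 'a \<Rightarrow> 'a set" where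
  "gen_subspace V1 V2 f = closure (cspan {(V1 ^^ m) ((V2 ^^ n) f) | m n. True})"

text \<open>Restriction V|M (M reducing) is a shift: its adjoint is V*|M.\<close>
definition shift_on :: "('a::chilbert_space \<Rightarrow> 'a) \<Rightarrow> 'a set \<Rightarrow> bool" where
  "shift_on V M \<longleftrightarrow> (\<forall>x\<in>M. (\<lambda>m. (adj V ^^ m) x) \<longlonglongrightarrow> 0)"

text \<open>Restriction V|M of an isometry to a reducing subspace is unitary iff onto.\<close>
definition unitary_on :: "('a::chilbert_space \<Rightarrow> 'a) \<Rightarrow> 'a set \<Rightarrow> bool" where
  "unitary_on V M \<longleftrightarrow> V ` M = M"

definition shift_unitary_on :: "('a::chilbert_space \<Rightarrow> 'a) \<Rightarrow> ('a \<Rightarrow> 'a) \<Rightarrow> 'a set \<Rightarrow> bool" where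
  "shift_unitary_on V1 V2 M \<longleftrightarrow> (\<forall>x\<in>M. commut V1 V2 x = 0) \<and>
     (\<exists>Kus Ksu. reducing V1 V2 Kus \<and> reducing V1 V2 Ksu \<and> Kus \<subseteq> M \<and> Ksu \<subseteq> M
        \<and> (\<forall>x\<in>Kus. \<forall>y\<in>Ksu. cinner x y = 0)
        \<and> M = {x + y | x y. x \<in> Kus \<and> y \<in> Ksu}
        \<and> unitary_on V1 Kus \<and> shift_on V2 Kus
        \<and> shift_on V1 Ksu \<and> unitary_on V2 Ksu)"

end

theory Submission
  imports Defs
begin


abbreviation ii :: "'a::chilbert_space \<Rightarrow> 'a" where "ii x \<equiv> cscale \<i> x"

lemma cscale_zero_right[simp]: "cscale c 0 = (0::'a::chilbert_space)"
proof -
  have "cscale c (0::'a) = cscale c 0 + cscale c 0" by (metis add.right_neutral cscale_add_right)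
  then show ?thesis by simp
qed

lemma cscale_minus_right: "cscale c (- x) = - cscale c (x::'a::chilbert_space)"
  by (metis add.right_inverse add_eq_0_iff cscale_add_right cscale_zero_right)

lemma cscale_diff_right: "cscale c (x - y) = cscale c x - cscale c (y::'a::chilbert_space)"
  by (metis cscale_add_right cscale_minus_right diff_conv_add_uminus)

lemma cscale_zero_left[simp]: "cscale 0 x = (0::'a::chilbert_space)"
  by (metis cscale_of_real of_real_0 scaleR_zero_left)

lemma cscale_one[simp]: "cscale 1 x = (x::'a::chilbert_space)"
  by (metis cscale_of_real of_real_1 scaleR_one)

lemma cscale_minus_left: "cscale (- c) x = - cscale c (x::'a::chilbert_space)"
  by (metis add.right_inverse add_eq_0_iff cscale_add_left cscale_zero_left)

lemma cscale_diff_left: "cscale (a - b) x = cscale a x - cscale b (x::'a::chilbert_space)"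
  by (metis cscale_add_left cscale_minus_left diff_conv_add_uminus)

lemma cscale_scaleR_right: "cscale c (r *\<^sub>R x) = r *\<^sub>R cscale c (x::'a::chilbert_space)"
  by (metis cscale_cscale cscale_of_real mult.commute)

lemma cscale_scaleR_left: "cscale (r *\<^sub>R c) x = r *\<^sub>R cscale c (x::'a::chilbert_space)"
  by (metis cscale_cscale cscale_of_real scaleR_conv_of_real)

lemma ii_ii[simp]: "ii (ii x) = - (x::'a::chilbert_space)"
  by (metis cscale_cscale cscale_minus_left cscale_one mult_minus1 power2_eq_square power2_i)

lemma inner_ii_left: "inner (ii x) y = - inner x (ii (y::'a::chilbert_space))"
proof -
  have "inner (ii x) y = inner (ii (ii x)) (ii y)" by (rule inner_cscale_ii[symmetric])
  then show ?thesis by simp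
qed

lemma inner_ii_self[simp]: "inner x (ii (x::'a::chilbert_space)) = 0"
  by (metis inner_commute inner_ii_left neg_equal_zero)

lemma norm_ii[simp]: "norm (ii (x::'a::chilbert_space)) = norm x"
  by (metis inner_cscale_ii norm_eq_sqrt_inner)

lemma cscale_Complex: "cscale (Complex a b) x = a *\<^sub>R x + b *\<^sub>R ii (x::'a::chilbert_space)"
proof -
  have "Complex a b = complex_of_real a + complex_of_real b * \<i>" by (simp add: Complex_eq)
  then show ?thesis
    by (metis cscale_add_left cscale_cscale cscale_of_real)
qed

lemma cscale_expand: "cscale c x = Re c *\<^sub>R x + Im c *\<^sub>R ii (x::'a::chilbert_space)"
  by (metis complex.exhaust_sel cscale_Complex)

lemma norm_cscale: "norm (cscale c x) = cmod c * norm (x::'a::chilbert_space)"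
proof -
  define a where "a = Re c"
  define b where "b = Im c"
  have ex: "cscale c x = a *\<^sub>R x + b *\<^sub>R ii x" unfolding a_def b_def by (rule cscale_expand)
  have i1: "inner (ii x) (ii x) = inner x x" by (rule inner_cscale_ii)
  have i2: "inner (ii x) x = 0" by (metis inner_commute inner_ii_self)
  have "inner (cscale c x) (cscale c x) = a*a * inner x x + b*b * inner (ii x) (ii x)
      + 2*a*b * inner x (ii x)"
    unfolding ex by (simp add: inner_add_left inner_add_right i2 algebra_simps)
  also have "\<dots> = (a*a + b*b) * inner x x" using i1 by (simp add: algebra_simps)
  finally have "(norm (cscale c x))^2 = (cmod c * norm x)^2"
    by (simp add: power2_norm_eq_inner[symmetric] cmod_def a_def b_def power_mult_distrib power2_eq_square)
  then show ?thesis by (simp add: power2_eq_iff_nonneg)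
qed

lemma cscale_bounded_linear: "bounded_linear (cscale c :: 'a::chilbert_space \<Rightarrow> 'a)"
  apply (rule bounded_linear_intro[where K="cmod c"])
  by (auto simp: cscale_add_right cscale_scaleR_right norm_cscale mult.commute)

lemma continuous_cscale[continuous_intros]:
  "continuous_on S (\<lambda>x. cscale c (x::'a::chilbert_space))"
  using bounded_linear.continuous_on[OF cscale_bounded_linear] continuous_on_id by blast

lemma tendsto_cscale[tendsto_intros]:
  "(f \<longlongrightarrow> l) F \<Longrightarrow> ((\<lambda>x. cscale c (f x)) \<longlongrightarrow> cscale c (l::'a::chilbert_space)) F"
  using bounded_linear.tendsto[OF cscale_bounded_linear] by blast

lemma Re_cinner[simp]: "Re (cinner x y) = inner x y"
  by (simp add: cinner_def)

lemma Im_cinner[simp]: "Im (cinner x y) = inner x (ii y)"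
  by (simp add: cinner_def)

lemma cinner_eq_0_iff: "cinner x y = 0 \<longleftrightarrow> inner x y = 0 \<and> inner x (ii y) = 0"
  by (simp add: cinner_def complex_eq_iff)

lemma cinner_add_left: "cinner (x + y) z = cinner x z + cinner y z"
  by (simp add: cinner_def inner_add_left complex_eq_iff)

lemma cinner_add_right: "cinner x (y + z) = cinner x y + cinner x z"
  by (simp add: cinner_def inner_add_right cscale_add_right complex_eq_iff)

lemma cinner_diff_left: "cinner (x - y) z = cinner x z - cinner y z"
  by (simp add: cinner_def inner_diff_left complex_eq_iff)

lemma cinner_diff_right: "cinner x (y - z) = cinner x y - cinner x z"
  by (simp add: cinner_def inner_diff_right cscale_diff_right complex_eq_iff)

lemma cinner_zero_left[simp]: "cinner 0 x = 0" and cinner_zero_right[simp]: "cinner x 0 = 0"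
  by (simp_all add: cinner_def complex_eq_iff)

lemma cinner_scaleR_left: "cinner (r *\<^sub>R x) y = complex_of_real r * cinner x y"
  by (simp add: cinner_def complex_eq_iff)

lemma cinner_scaleR_right: "cinner x (r *\<^sub>R y) = complex_of_real r * cinner x y"
  by (simp add: cinner_def complex_eq_iff cscale_scaleR_right)

lemma cinner_ii_left: "cinner (ii x) y = \<i> * cinner x y"
  by (simp add: cinner_def complex_eq_iff inner_ii_left inner_cscale_ii)

lemma cinner_ii_right: "cinner x (ii y) = - \<i> * cinner x y"
  by (simp add: cinner_def complex_eq_iff)

lemma cinner_cscale_left: "cinner (cscale c x) y = c * cinner x y"
proof -
  have "cinner (cscale c x) y = complex_of_real (Re c) * cinner x y + complex_of_real (Im c) * (\<i> * cinner x y)"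
    by (subst cscale_expand, simp only: cinner_add_left cinner_scaleR_left cinner_ii_left)
  also have "\<dots> = (complex_of_real (Re c) + \<i> * complex_of_real (Im c)) * cinner x y"
    by (simp add: algebra_simps)
  also have "\<dots> = c * cinner x y" using complex_eq[of c] by simp
  finally show ?thesis .
qed


lemma cinner_commute: "cinner y x = cnj (cinner x y)"
proof -
  have "inner y (ii x) = - inner x (ii y)" by (metis inner_commute inner_ii_left)
  then show ?thesis by (simp add: cinner_def complex_eq_iff inner_commute)
qed

lemma cinner_cscale_right: "cinner x (cscale c y) = cnj c * cinner x y"
  by (metis cinner_commute cinner_cscale_left complex_cnj_cnj complex_cnj_mult)

lemma cinner_self: "cinner x x = complex_of_real ((norm x)^2)"
  by (simp add: cinner_def complex_eq_iff power2_norm_eq_inner)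

lemma cinner_self_eq_0[simp]: "cinner x x = 0 \<longleftrightarrow> x = 0"
  by (simp add: cinner_self)

lemma cinner_ext: "(\<And>x. cinner x a = cinner x b) \<Longrightarrow> a = b"
  by (metis cinner_diff_right cinner_self_eq_0 diff_self eq_iff_diff_eq_0)

lemma cinner_ext_left: "(\<And>x. cinner a x = cinner b x) \<Longrightarrow> a = b"
  by (metis cinner_diff_left cinner_self_eq_0 diff_self eq_iff_diff_eq_0)

lemma cmod_cinner_le: "cmod (cinner x y) \<le> norm x * norm y"
proof -
  define c where "c = cinner x y"
  show ?thesis
  proof (cases "c = 0")
    case True then show ?thesis by (simp add: c_def)
  next
    case False
    define u where "u = cnj c / cmod c"
    have "cmod u = 1" using False by (simp add: u_def norm_divide)
    have "u * c = (c * cnj c) / complex_of_real (cmod c)" by (simp add: u_def mult.commute)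
    also have "\<dots> = complex_of_real ((cmod c)^2) / complex_of_real (cmod c)"
      by (simp only: complex_norm_square)
    also have "\<dots> = complex_of_real (cmod c)" using False by (simp add: power2_eq_square)
    finally have "cinner (cscale u x) y = complex_of_real (cmod c)"
      by (simp add: cinner_cscale_left c_def)
    then have "cmod c = inner (cscale u x) y" by (metis Re_cinner Re_complex_of_real)
    also have "\<dots> \<le> norm (cscale u x) * norm y" by (rule norm_cauchy_schwarz)
    also have "\<dots> = norm x * norm y" using \<open>cmod u = 1\<close> by (simp add: norm_cscale)
    finally show ?thesis by (simp add: c_def)
  qed
qed



subsection \<open>Projection theorem (real)\<close>

lemma infdist_approx:
  assumes "A \<noteq> {}" "e > 0"
  shows "\<exists>a\<in>A. dist x a < infdist x A + e"
proof -
  have "(INF a\<in>A. dist x a) < infdist x A + e" using assms by (simp add: infdist_notempty)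
  then show ?thesis using assms by (subst (asm) cINF_less_iff) auto
qed

lemma min_orth:
  fixes S :: "'a::real_inner set"
  assumes "subspace S" "p \<in> S" "\<forall>y\<in>S. norm (x - p) \<le> norm (x - y)" "y \<in> S"
  shows "inner (x - p) y = 0"
proof (rule ccontr)
  assume a0: "inner (x - p) y \<noteq> 0"
  define a where "a = inner (x - p) y"
  have "y \<noteq> 0" using a0 by auto
  then have ny: "inner y y > 0" by simp
  define t where "t = a / inner y y"
  have "p + t *\<^sub>R y \<in> S" using assms by (simp add: subspace_add subspace_scale)
  then have "norm (x - p) \<le> norm (x - (p + t *\<^sub>R y))" using assms by blast
  then have "(norm (x - p))^2 \<le> (norm ((x - p) - t *\<^sub>R y))^2"
    by (simp add: algebra_simps power_mono)
  then have "inner (x-p) (x-p) \<le> inner (x-p) (x-p) - 2 * t * a + t * t * inner y y"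
    by (simp add: power2_norm_eq_inner inner_diff_left inner_diff_right a_def inner_commute algebra_simps)
  moreover have "- 2 * t * a + t * t * inner y y = - a * a / inner y y"
    using ny by (simp add: t_def field_simps power2_eq_square)
  moreover have "a * a > 0" using a0 unfolding a_def by (metis not_real_square_gt_zero)
  then have "a * a / inner y y > 0" using ny by (intro divide_pos_pos)
  ultimately show False by linarith
qed

lemma proj_exists:
  fixes S :: "'a::{real_inner,complete_space} set"
  assumes cl: "closed S" and sub: "subspace S"
  shows "\<exists>p\<in>S. \<forall>y\<in>S. inner (x - p) y = 0"
proof -
  have ne: "S \<noteq> {}" using sub subspace_0 by blast
  define d where "d = infdist x S"
  have d0: "d \<ge> 0" by (simp add: d_def infdist_nonneg)
  have "\<forall>n. \<exists>y\<in>S. dist x y < d + 1 / (real n + 1)"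
    using infdist_approx[OF ne] unfolding d_def by simp
  then obtain Y where Y: "\<And>n. Y n \<in> S" "\<And>n. dist x (Y n) < d + 1 / (real n + 1)" by metis
  have dle: "\<And>y. y \<in> S \<Longrightarrow> d \<le> norm (x - y)" by (metis d_def dist_norm infdist_le)
  have key: "(norm (Y n - Y m))^2 \<le> 2 * (d + 1/(real n+1))^2 + 2 * (d + 1/(real m+1))^2 - 4 * d^2"
    for n m
  proof -
    define a where "a = x - Y n"
    define b where "b = x - Y m"
    have par: "(norm (a - b))^2 + (norm (a + b))^2 = 2 * (norm a)^2 + 2 * (norm b)^2"
      by (simp add: power2_norm_eq_inner inner_add_left inner_add_right inner_diff_left
          inner_diff_right inner_commute algebra_simps)
    have mid: "(1/2) *\<^sub>R (Y n + Y m) \<in> S" using Y(1) sub by (simp add: subspace_add subspace_scale)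
    have "a + b = 2 *\<^sub>R (x - (1/2) *\<^sub>R (Y n + Y m))" by (simp add: a_def b_def algebra_simps scaleR_2)
    then have "norm (a + b) = 2 * norm (x - (1/2) *\<^sub>R (Y n + Y m))" by simp
    then have "norm (a + b) \<ge> 2 * d" using dle[OF mid] by simp
    then have "(2 * d)^2 \<le> (norm (a + b))^2" using d0 by (intro power_mono) auto
    then have ab: "(norm (a + b))^2 \<ge> 4 * d^2" by (simp add: power_mult_distrib)
    have na: "norm a \<le> d + 1/(real n+1)" using Y(2)[of n] by (simp add: a_def dist_norm)
    have nb: "norm b \<le> d + 1/(real m+1)" using Y(2)[of m] by (simp add: b_def dist_norm)
    have "(norm a)^2 \<le> (d + 1/(real n+1))^2" using na by (simp add: power_mono)
    moreover have "(norm b)^2 \<le> (d + 1/(real m+1))^2" using nb by (simp add: power_mono)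
    moreover have "(norm (Y n - Y m))^2 = (norm (a - b))^2"
    proof -
      have "a - b = Y m - Y n" by (simp add: a_def b_def)
      then show ?thesis by (simp add: norm_minus_commute)
    qed
    ultimately show ?thesis using par ab by linarith
  qed
  have "Cauchy Y"
  proof (rule metric_CauchyI)
    fix e :: real assume e: "e > 0"
    define c where "c = e^2 / (4 * (2 * d + 1))"
    have c0: "c > 0" using e d0 by (simp add: c_def)
    obtain M :: nat where M: "1 / (real M + 1) < min 1 c"
      using c0 by (metis min_less_iff_conj nat_approx_posE zero_less_one of_nat_Suc add.commute)
    show "\<exists>M. \<forall>m\<ge>M. \<forall>n\<ge>M. dist (Y m) (Y n) < e"
    proof (intro exI allI impI)
      fix m n assume mn: "M \<le> m" "M \<le> n"
      define \<epsilon> where "\<epsilon> = 1 / (real M + 1)"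
      have le1: "1/(real n+1) \<le> \<epsilon>" "1/(real m+1) \<le> \<epsilon>" using mn
        by (auto simp: \<epsilon>_def intro!: divide_left_mono)
      have e1: "\<epsilon> < 1" "\<epsilon> > 0" "\<epsilon> < c" using M by (auto simp: \<epsilon>_def)
      have pos: "1/(real n+1) \<ge> 0" "1/(real m+1) \<ge> 0" by auto
      have "(d + 1/(real n+1))^2 \<le> (d + \<epsilon>)^2" "(d + 1/(real m+1))^2 \<le> (d + \<epsilon>)^2"
        using le1 pos d0 by (auto intro!: power_mono)
      then have "(norm (Y m - Y n))^2 \<le> 4 * (d + \<epsilon>)^2 - 4 * d^2" using key[of m n] by linarith
      also have "\<dots> = 4 * \<epsilon> * (2 * d + \<epsilon>)" by (simp add: power2_eq_square algebra_simps)
      also have "\<dots> \<le> 4 * \<epsilon> * (2 * d + 1)"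
        using e1 d0 by (intro mult_left_mono) auto
      also have "\<dots> < 4 * c * (2 * d + 1)"
        using e1 d0 by (intro mult_strict_right_mono) auto
      also have "\<dots> = e^2" using d0 by (simp add: c_def field_simps)
      finally have "(norm (Y m - Y n))^2 < e^2" .
      then show "dist (Y m) (Y n) < e" using e by (simp add: dist_norm power_less_imp_less_base)
    qed
  qed
  then obtain p where p: "Y \<longlonglongrightarrow> p" using convergent_eq_Cauchy by blast
  have pS: "p \<in> S" using closed_sequentially[OF cl Y(1) p] .
  have "norm (x - p) \<le> d"
  proof -
    have "(\<lambda>n. dist x (Y n)) \<longlonglongrightarrow> dist x p" using p by (intro tendsto_intros)
    moreover have "(\<lambda>n. 1 / (real n + 1)) \<longlonglongrightarrow> 0"
      using LIMSEQ_inverse_real_of_nat by (simp add: inverse_eq_divide add.commute)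
    then have "(\<lambda>n. d + 1 / (real n + 1)) \<longlonglongrightarrow> d + 0"
      by (intro tendsto_intros)
    ultimately have "dist x p \<le> d + 0"
      using Y(2) by (intro LIMSEQ_le) (auto intro: less_imp_le)
    then show ?thesis by (simp add: dist_norm)
  qed
  then have "\<forall>y\<in>S. norm (x - p) \<le> norm (x - y)" using dle by force
  then show ?thesis using pS min_orth[OF sub pS] by blast
qed


lemma csubspace_subspace: "csubspace S \<Longrightarrow> subspace S"
  unfolding csubspace_def subspace_def by (metis cscale_of_real)

lemma csubspace_scaleR: "csubspace S \<Longrightarrow> x \<in> S \<Longrightarrow> r *\<^sub>R x \<in> S"
  by (metis csubspace_def cscale_of_real)

lemma csubspace_add: "csubspace S \<Longrightarrow> x \<in> S \<Longrightarrow> y \<in> S \<Longrightarrow> x + y \<in> S"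
  by (simp add: csubspace_def)

lemma csubspace_cscale: "csubspace S \<Longrightarrow> x \<in> S \<Longrightarrow> cscale c x \<in> S"
  by (simp add: csubspace_def)

lemma csubspace_0: "csubspace S \<Longrightarrow> 0 \<in> S"
  by (simp add: csubspace_def)

lemma csubspace_minus: "csubspace S \<Longrightarrow> x \<in> S \<Longrightarrow> - x \<in> S"
  by (metis csubspace_scaleR scaleR_minus1_left)

lemma csubspace_diff: "csubspace S \<Longrightarrow> x \<in> S \<Longrightarrow> y \<in> S \<Longrightarrow> x - y \<in> S"
  by (metis csubspace_add csubspace_minus diff_conv_add_uminus)

definition proj :: "'a::chilbert_space set \<Rightarrow> 'a \<Rightarrow> 'a" where
  "proj S x = (SOME p. p \<in> S \<and> (\<forall>y\<in>S. inner (x - p) y = 0))"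

lemma proj_spec:
  assumes "closed S" "subspace S"
  shows "proj S x \<in> S" "\<And>y. y \<in> S \<Longrightarrow> inner (x - proj S x) y = 0"
proof -
  have "\<exists>p. p \<in> S \<and> (\<forall>y\<in>S. inner (x - p) y = 0)" using proj_exists[OF assms] by blast
  then have "proj S x \<in> S \<and> (\<forall>y\<in>S. inner (x - proj S x) y = 0)"
    unfolding proj_def by (rule someI_ex)
  then show "proj S x \<in> S" "\<And>y. y \<in> S \<Longrightarrow> inner (x - proj S x) y = 0" by auto
qed

lemma proj_cspec:
  assumes "closed_csubspace S"
  shows "proj S x \<in> S" "\<And>y. y \<in> S \<Longrightarrow> cinner (x - proj S x) y = 0"
proof -
  have cs: "closed S" "subspace S" "csubspace S"
    using assms csubspace_subspace by (auto simp: closed_csubspace_def)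
  show "proj S x \<in> S" using proj_spec[OF cs(1,2)] by blast
  fix y assume "y \<in> S"
  then have "ii y \<in> S" using cs(3) csubspace_cscale by blast
  then show "cinner (x - proj S x) y = 0" using proj_spec(2)[OF cs(1,2)] \<open>y \<in> S\<close>
    by (simp add: cinner_eq_0_iff)
qed

subsection \<open>Riesz representation (real)\<close>

lemma riesz:
  fixes l :: "'a::chilbert_space \<Rightarrow> real"
  assumes bl: "bounded_linear l"
  shows "\<exists>z. \<forall>x. l x = inner x z"
proof (cases "\<forall>x. l x = 0")
  case True then show ?thesis by (intro exI[of _ 0]) simp
next
  case False
  then obtain x0 where x0: "l x0 \<noteq> 0" by blast
  interpret l: bounded_linear l by (rule bl)
  define K where "K = {x. l x = 0}"
  have clK: "closed K" unfolding K_def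
    by (rule closed_Collect_eq) (auto intro: l.continuous_on continuous_on_id)
  have subK: "subspace K" unfolding K_def subspace_def by (simp add: l.add l.scaleR)
  define q where "q = x0 - proj K x0"
  have lq: "l q = l x0" using proj_spec(1)[OF clK subK, of x0] by (simp add: q_def l.diff K_def)
  have orth: "\<And>w. w \<in> K \<Longrightarrow> inner q w = 0" using proj_spec(2)[OF clK subK] q_def by blast
  have q0: "q \<noteq> 0" using lq x0 by auto
  then have qq: "inner q q > 0" by simp
  show ?thesis
  proof (intro exI allI)
    fix x
    define w where "w = x - (l x / l q) *\<^sub>R q"
    have "l w = 0" using lq x0 by (simp add: w_def l.diff l.scaleR)
    then have "inner q w = 0" using orth K_def by blast
    then have iqx: "inner q x = (l x / l q) * inner q q" by (simp add: w_def inner_diff_right)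
    have "inner x ((l q / inner q q) *\<^sub>R q) = (l q / inner q q) * inner q x"
      by (simp add: inner_commute)
    also have "\<dots> = l x" using iqx qq lq x0 by (simp add: field_simps)
    finally show "l x = inner x ((l q / inner q q) *\<^sub>R q)" by simp
  qed
qed

subsection \<open>Complex linear operators and adjoints\<close>

lemma clinear_opD:
  assumes "clinear_op T"
  shows "bounded_linear T" "T (cscale c x) = cscale c (T x)"
  using assms by (auto simp: clinear_op_def)

lemma clinear_op_simps:
  assumes "clinear_op T"
  shows "T (x + y) = T x + T y" "T (x - y) = T x - T y" "T (- x) = - T x" "T 0 = 0"
    "T (r *\<^sub>R x) = r *\<^sub>R T x" "T (cscale c x) = cscale c (T x)"
  using assms by (auto simp: clinear_op_def linear_simps bounded_linear.linear)

lemma clinear_op_comp: "clinear_op A \<Longrightarrow> clinear_op B \<Longrightarrow> clinear_op (A \<circ> B)"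
  unfolding clinear_op_def comp_def by (auto intro: bounded_linear_compose)

lemma clinear_op_id: "clinear_op id"
  by (auto simp: clinear_op_def bounded_linear_ident[unfolded id_def[symmetric]])

lemma clinear_op_cont: "clinear_op T \<Longrightarrow> continuous_on S T"
  using bounded_linear.continuous_on[OF clinear_opD(1) continuous_on_id, of T S] by simp

lemma clinear_op_tendsto: "clinear_op T \<Longrightarrow> (f \<longlongrightarrow> l) F \<Longrightarrow> ((\<lambda>x. T (f x)) \<longlongrightarrow> T l) F"
  by (rule bounded_linear.tendsto[OF clinear_opD(1)])

lemma clinear_op_bound: "clinear_op T \<Longrightarrow> \<exists>K>0. \<forall>x. norm (T x) \<le> norm x * K"
  using bounded_linear.pos_bounded clinear_opD(1) by blast

lemma adj_ex:
  assumes T: "clinear_op T"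
  shows "\<exists>S. \<forall>x y. cinner (T x) y = cinner x (S y)"
proof -
  interpret T: bounded_linear T using T by (simp add: clinear_op_def)
  have "\<forall>y. \<exists>z. \<forall>x. inner (T x) y = inner x z"
  proof
    fix y
    have "bounded_linear (\<lambda>x. inner (T x) y)"
      by (rule bounded_linear_compose[OF bounded_linear_inner_left T.bounded_linear_axioms])
    then show "\<exists>z. \<forall>x. inner (T x) y = inner x z" by (rule riesz)
  qed
  then obtain S where S: "\<And>x y. inner (T x) y = inner x (S y)" by metis
  have "cinner (T x) y = cinner x (S y)" for x y
  proof -
    have "inner (T x) (ii y) = - inner (ii (T x)) y" by (simp add: inner_ii_left)
    also have "\<dots> = - inner (T (ii x)) y" using clinear_opD(2)[OF T] by simp
    also have "\<dots> = - inner (ii x) (S y)" by (simp add: S)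
    also have "\<dots> = inner x (ii (S y))" by (simp add: inner_ii_left)
    finally show ?thesis using S by (simp add: cinner_def)
  qed
  then show ?thesis by blast
qed

lemma adj_uniq:
  assumes "\<forall>x y. cinner (T x) y = cinner x (S y)" "\<forall>x y. cinner (T x) y = cinner x (S' y)"
  shows "S = S'"
proof
  fix y show "S y = S' y" using assms by (intro cinner_ext) metis
qed

lemma adj_prop:
  assumes "clinear_op T"
  shows "cinner (T x) y = cinner x (adj T y)"
proof -
  have "\<exists>!S. \<forall>x y. cinner (T x) y = cinner x (S y)"
    using adj_ex[OF assms] adj_uniq by blast
  then have "\<forall>x y. cinner (T x) y = cinner x (adj T y)"
    unfolding adj_def by (rule theI')
  then show ?thesis by blast
qed

lemma adj_eqI:
  assumes "clinear_op T" "\<And>x y. cinner (T x) y = cinner x (S y)"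
  shows "adj T = S"
  using adj_uniq[of T "adj T" S] adj_prop[OF assms(1)] assms(2) by blast

lemma adj_prop2:
  assumes "clinear_op T"
  shows "cinner x (T y) = cinner (adj T x) y"
  by (metis adj_prop assms cinner_commute)

lemma adj_inner:
  assumes "clinear_op T"
  shows "inner (T x) y = inner x (adj T y)"
  by (metis Re_cinner adj_prop assms)

lemma adj_inner2:
  assumes "clinear_op T"
  shows "inner x (T y) = inner (adj T x) y"
  by (metis adj_inner assms inner_commute)

lemma adj_clinear:
  assumes T: "clinear_op T"
  shows "clinear_op (adj T)"
proof -
  let ?S = "adj T"
  have add: "?S (a + b) = ?S a + ?S b" for a b
    by (rule cinner_ext) (simp add: adj_prop[OF T, symmetric] cinner_add_right)
  have cs: "?S (cscale c a) = cscale c (?S a)" for c a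
    by (rule cinner_ext) (simp add: adj_prop[OF T, symmetric] cinner_cscale_right)
  obtain K where K: "K > 0" "\<And>x. norm (T x) \<le> norm x * K" using clinear_op_bound[OF T] by blast
  have bd: "norm (?S y) \<le> norm y * K" for y
  proof -
    have "(norm (?S y))^2 = inner (T (?S y)) y" by (simp add: adj_inner[OF T] power2_norm_eq_inner)
    also have "\<dots> \<le> norm (T (?S y)) * norm y" by (rule norm_cauchy_schwarz)
    also have "\<dots> \<le> norm (?S y) * K * norm y" using K by (simp add: mult_right_mono)
    finally have "norm (?S y) * norm (?S y) \<le> norm (?S y) * (norm y * K)"
      by (simp add: power2_eq_square mult_ac)
    then show ?thesis
      by (cases "?S y = 0") (use K in \<open>auto simp: mult_le_cancel_left\<close>)
  qed
  have "bounded_linear ?S"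
    by (rule bounded_linear_intro[where K=K]) (auto simp: add cs bd cscale_of_real[symmetric] simp del: cscale_of_real)
  then show ?thesis using cs by (simp add: clinear_op_def)
qed

lemma adj_adj: "clinear_op T \<Longrightarrow> adj (adj T) = T"
  by (rule adj_eqI) (auto simp: adj_clinear adj_prop2)

lemma adj_comp:
  assumes "clinear_op A" "clinear_op B"
  shows "adj (A \<circ> B) = adj B \<circ> adj A"
  by (rule adj_eqI) (auto simp: assms clinear_op_comp adj_prop)

lemma isometry_clinear: "is_isometry V \<Longrightarrow> clinear_op V"
  by (simp add: is_isometry_def)

lemma isometry_inner:
  assumes "is_isometry V"
  shows "inner (V x) (V y) = inner x y"
proof -
  have V: "clinear_op V" "\<And>x. norm (V x) = norm x" using assms by (auto simp: is_isometry_def)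
  have "(norm (V (x + y)))^2 = (norm (x + y))^2" using V by simp
  then have "(norm (V x + V y))^2 = (norm (x + y))^2" using clinear_op_simps(1)[OF V(1)] by simp
  then have "inner (V x) (V x) + 2 * inner (V x) (V y) + inner (V y) (V y) = inner x x + 2 * inner x y + inner y y"
    by (simp add: power2_norm_eq_inner inner_add_left inner_add_right inner_commute)
  moreover have "inner (V x) (V x) = inner x x" "inner (V y) (V y) = inner y y"
    using V(2) by (metis power2_norm_eq_inner)+
  ultimately show ?thesis by simp
qed

lemma isometry_cinner:
  assumes "is_isometry V"
  shows "cinner (V x) (V y) = cinner x y"
proof -
  have "inner (V x) (ii (V y)) = inner x (ii y)"
    using isometry_inner[OF assms, of x "ii y"] clinear_opD(2)[OF isometry_clinear[OF assms]] by simp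
  then show ?thesis using isometry_inner[OF assms] by (simp add: cinner_def)
qed

lemma isometry_adj_left:
  assumes "is_isometry V"
  shows "adj V (V x) = x"
  by (rule cinner_ext) (metis adj_prop assms isometry_cinner isometry_clinear)



subsection \<open>Spans, closures, complements\<close>

lemma cspan_csubspace: "csubspace (cspan S)"
  unfolding cspan_def csubspace_def by auto

lemma cspan_superset: "S \<subseteq> cspan S"
  unfolding cspan_def by auto

lemma cspan_minimal: "csubspace T \<Longrightarrow> S \<subseteq> T \<Longrightarrow> cspan S \<subseteq> T"
  unfolding cspan_def by auto

lemma cspan_mono: "A \<subseteq> B \<Longrightarrow> cspan A \<subseteq> cspan B"
  by (meson cspan_csubspace cspan_minimal cspan_superset order_trans)

lemma closure_csubspace:
  assumes "csubspace S"
  shows "csubspace (closure S)"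
  unfolding csubspace_def
proof (intro conjI ballI allI)
  show "0 \<in> closure S" using assms csubspace_0 closure_subset by blast
next
  fix x y assume "x \<in> closure S" "y \<in> closure S"
  then obtain f g where f: "\<forall>n. f n \<in> S" "f \<longlonglongrightarrow> x" and g: "\<forall>n. g n \<in> S" "g \<longlonglongrightarrow> y"
    unfolding closure_sequential by blast
  have "\<forall>n. f n + g n \<in> S" using f g assms csubspace_add by blast
  moreover have "(\<lambda>n. f n + g n) \<longlonglongrightarrow> x + y" using f g by (intro tendsto_intros)
  ultimately show "x + y \<in> closure S" unfolding closure_sequential
    by (intro exI[of _ "\<lambda>n. f n + g n"]) auto
next
  fix c x assume "x \<in> closure S"
  then obtain f where f: "\<forall>n. f n \<in> S" "f \<longlonglongrightarrow> x"
    unfolding closure_sequential by blast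
  have "\<forall>n. cscale c (f n) \<in> S" using f assms csubspace_cscale by blast
  moreover have "(\<lambda>n. cscale c (f n)) \<longlonglongrightarrow> cscale c x" using f by (intro tendsto_intros)
  ultimately show "cscale c x \<in> closure S" unfolding closure_sequential
    by (intro exI[of _ "\<lambda>n. cscale c (f n)"]) auto
qed

lemma closed_csubspace_ccspan: "closed_csubspace (closure (cspan S))"
  by (simp add: closed_csubspace_def closure_csubspace cspan_csubspace)

lemma ccspan_superset: "S \<subseteq> closure (cspan S)"
  using closure_subset cspan_superset by blast

lemma ccspan_minimal: "closed_csubspace P \<Longrightarrow> S \<subseteq> P \<Longrightarrow> closure (cspan S) \<subseteq> P"
  by (simp add: closed_csubspace_def closure_minimal cspan_minimal)

lemma ccspan_mono: "A \<subseteq> B \<Longrightarrow> closure (cspan A) \<subseteq> closure (cspan B)"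
  by (simp add: closure_mono cspan_mono)

lemma closed_csubspace_Int: "closed_csubspace A \<Longrightarrow> closed_csubspace B \<Longrightarrow> closed_csubspace (A \<inter> B)"
  by (auto simp: closed_csubspace_def csubspace_def)

lemma closed_csubspace_vimage:
  assumes L: "clinear_op L" and M: "closed_csubspace M"
  shows "closed_csubspace {x. L x \<in> M}"
proof -
  have "csubspace {x. L x \<in> M}" using M unfolding closed_csubspace_def csubspace_def
    by (simp add: clinear_op_simps[OF L])
  moreover have "closed {x. L x \<in> M}"
  proof -
    have "closed (L -` M \<inter> UNIV)"
      using continuous_on_closed_vimage[of UNIV L] clinear_op_cont[OF L] M
      by (simp add: closed_csubspace_def)
    then show ?thesis by (simp add: vimage_def)
  qed
  ultimately show ?thesis by (simp add: closed_csubspace_def)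
qed

lemma ccspan_invariant:
  assumes L: "clinear_op L" and M: "closed_csubspace M" and S: "\<And>x. x \<in> S \<Longrightarrow> L x \<in> M"
    and "x \<in> closure (cspan S)"
  shows "L x \<in> M"
proof -
  have "closure (cspan S) \<subseteq> {x. L x \<in> M}"
    by (rule ccspan_minimal[OF closed_csubspace_vimage[OF L M]]) (use S in auto)
  then show ?thesis using assms(4) by blast
qed

lemma tendsto_cinner_left:
  "(f \<longlongrightarrow> l) F \<Longrightarrow> ((\<lambda>n. cinner (f n) y) \<longlongrightarrow> cinner l y) F"
  unfolding cinner_def by (intro tendsto_intros)

lemma tendsto_cinner_right:
  "(f \<longlongrightarrow> l) F \<Longrightarrow> ((\<lambda>n. cinner y (f n)) \<longlongrightarrow> cinner y l) F"
  unfolding cinner_def by (intro tendsto_intros)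

lemma orth_compl_closed_csubspace: "closed_csubspace (orth_compl S)"
proof -
  have cs: "csubspace (orth_compl S)"
    unfolding csubspace_def orth_compl_def by (auto simp: cinner_add_left cinner_cscale_left)
  have "closed {x. cinner x y = 0}" for y
  proof -
    have "{x. cinner x y = 0} = {x. inner x y = 0} \<inter> {x. inner x (ii y) = 0}"
      by (auto simp: cinner_eq_0_iff)
    moreover have "closed {x. inner x y = 0}" "closed {x. inner x (ii y) = 0}"
      by (auto intro!: closed_Collect_eq continuous_intros)
    ultimately show ?thesis by auto
  qed
  then have "closed (\<Inter>y\<in>S. {x. cinner x y = 0})" by auto
  moreover have "orth_compl S = (\<Inter>y\<in>S. {x. cinner x y = 0})" by (auto simp: orth_compl_def)
  ultimately show ?thesis using cs by (simp add: closed_csubspace_def)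
qed

lemma orth_compl_sym: "A \<subseteq> orth_compl B \<Longrightarrow> B \<subseteq> orth_compl A"
proof
  fix b assume A: "A \<subseteq> orth_compl B" and b: "b \<in> B"
  have "cinner b a = 0" if "a \<in> A" for a
  proof -
    have "cinner a b = 0" using A b that by (auto simp: orth_compl_def)
    then show ?thesis by (subst cinner_commute) simp
  qed
  then show "b \<in> orth_compl A" by (simp add: orth_compl_def)
qed

lemma orth_compl_ccspan: "A \<subseteq> orth_compl B \<Longrightarrow> closure (cspan A) \<subseteq> orth_compl B"
  by (simp add: ccspan_minimal orth_compl_closed_csubspace)

lemma orth_compl_self: "x \<in> orth_compl S \<Longrightarrow> x \<in> S \<Longrightarrow> x = 0"
  unfolding orth_compl_def by auto

lemma orth_compl_antimono: "A \<subseteq> B \<Longrightarrow> orth_compl B \<subseteq> orth_compl A"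
  unfolding orth_compl_def by auto

lemma orth_compl_ccspan_eq: "orth_compl (closure (cspan A)) = orth_compl A"
proof
  show "orth_compl (closure (cspan A)) \<subseteq> orth_compl A"
    by (rule orth_compl_antimono[OF ccspan_superset])
  have "A \<subseteq> orth_compl (orth_compl A)" by (rule orth_compl_sym) simp
  then have "closure (cspan A) \<subseteq> orth_compl (orth_compl A)" by (rule orth_compl_ccspan)
  then show "orth_compl A \<subseteq> orth_compl (closure (cspan A))" by (rule orth_compl_sym)
qed

lemma proj_decomp:
  assumes "closed_csubspace M"
  shows "\<exists>p q. x = p + q \<and> p \<in> M \<and> q \<in> orth_compl M"
proof -
  have "x = proj M x + (x - proj M x)" by simp
  moreover have "x - proj M x \<in> orth_compl M" using proj_cspec(2)[OF assms] by (auto simp: orth_compl_def)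
  ultimately show ?thesis using proj_cspec(1)[OF assms] by blast
qed


subsection \<open>Eigenvectors of compact symmetric operators\<close>

lemma norm_diff_scaleR_sq:
  "(norm (u - c *\<^sub>R v))^2 = (norm u)^2 - 2 * c * inner u v + c^2 * (norm (v::'a::real_inner))^2"
  unfolding power2_norm_eq_inner
  by (simp add: inner_diff_left inner_diff_right inner_commute algebra_simps power2_eq_square)

lemma sa_eigen:
  fixes A :: "'a::chilbert_space \<Rightarrow> 'a"
  assumes bl: "bounded_linear A"
    and sym: "\<And>x y. inner (A x) y = inner x (A y)"
    and cpt: "\<And>x. (\<forall>n::nat. norm (x n) \<le> 1) \<Longrightarrow> \<exists>r l. strict_mono r \<and> (\<lambda>n. A (x (r n))) \<longlonglongrightarrow> l"
    and clX: "closed X" and subX: "subspace X" and invX: "\<And>x. x \<in> X \<Longrightarrow> A x \<in> X"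
    and ne: "x0 \<in> X" "x0 \<noteq> 0"
  shows "\<exists>e\<in>X. e \<noteq> 0 \<and> (\<exists>c. A e = c *\<^sub>R e)"
proof (cases "\<forall>x\<in>X. A x = 0")
  case True
  then show ?thesis using ne by (intro bexI[of _ x0]) auto
next
  case False
  interpret A: bounded_linear A by (rule bl)
  obtain x1 where x1: "x1 \<in> X" "A x1 \<noteq> 0" using False by blast
  obtain K where K: "K > 0" "\<And>x. norm (A x) \<le> norm x * K" using A.pos_bounded by blast
  define U where "U = {x\<in>X. norm x \<le> 1}"
  define N where "N = (\<lambda>x. norm (A x)) ` U"
  have bdd: "bdd_above N" unfolding N_def U_def bdd_above_def
  proof (intro exI[of _ K] ballI)
    fix t assume "t \<in> (\<lambda>x. norm (A x)) ` {x \<in> X. norm x \<le> 1}"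
    then obtain x where "t = norm (A x)" "norm x \<le> 1" by auto
    then show "t \<le> K" using K(2)[of x] K(1) by (smt (verit) mult_left_le_one_le norm_ge_zero)
  qed
  have U0: "0 \<in> U" using subX by (simp add: U_def subspace_0)
  then have Nne: "N \<noteq> {}" by (auto simp: N_def)
  define s where "s = Sup N"
  have s_ge: "norm (A x) \<le> s" if "x \<in> U" for x
    unfolding s_def N_def using bdd that by (auto simp: N_def intro: cSup_upper)
  have scaleU: "(1 / norm y) *\<^sub>R y \<in> U" if "y \<in> X" "y \<noteq> 0" for y
    using that subX by (auto simp: U_def subspace_scale)
  have bound: "norm (A y) \<le> s * norm y" if "y \<in> X" for y
  proof (cases "y = 0")
    case True then show ?thesis by simp
  next
    case False
    have "norm (A ((1 / norm y) *\<^sub>R y)) \<le> s" using s_ge scaleU[OF that False] by blast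
    then have "norm (A y) / norm y \<le> s" by (simp add: A.scaleR)
    then show ?thesis using False by (simp add: divide_le_eq mult.commute)
  qed
  have s0: "s > 0"
  proof -
    have x1n: "x1 \<noteq> 0" using x1 A.zero by auto
    have "0 < norm (A x1) / norm x1" using x1 x1n by (intro divide_pos_pos) auto
    also have "\<dots> = norm (A ((1 / norm x1) *\<^sub>R x1))" by (simp add: A.scaleR)
    also have "\<dots> \<le> s" using s_ge[OF scaleU[OF x1(1) x1n]] .
    finally show ?thesis .
  qed
  have "\<forall>n. \<exists>x\<in>U. s - 1 / (real n + 1) < norm (A x)"
  proof
    fix n :: nat
    have "s - 1 / (real n + 1) < Sup N" unfolding s_def[symmetric] by simp
    then obtain t where "t \<in> N" "s - 1 / (real n + 1) < t" using less_cSup_iff[OF Nne bdd] by blast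
    then show "\<exists>x\<in>U. s - 1 / (real n + 1) < norm (A x)" by (auto simp: N_def)
  qed
  then obtain xs where xs: "\<And>n. xs n \<in> U" "\<And>n. s - 1 / (real n + 1) < norm (A (xs n))" by metis
  have xsX: "xs n \<in> X" and xs1: "norm (xs n) \<le> 1" for n using xs(1)[of n] by (auto simp: U_def)
  have lim1: "(\<lambda>n. 1 / (real n + 1)) \<longlonglongrightarrow> 0"
    using LIMSEQ_inverse_real_of_nat by (simp add: inverse_eq_divide add.commute)
  have nA: "(\<lambda>n. norm (A (xs n))) \<longlonglongrightarrow> s"
  proof (rule tendsto_sandwich[where f="\<lambda>n. s - 1 / (real n + 1)" and h="\<lambda>n. s"])
    show "\<forall>\<^sub>F n in sequentially. s - 1 / (real n + 1) \<le> norm (A (xs n))" using xs(2) by (intro always_eventually allI less_imp_le) auto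
    show "\<forall>\<^sub>F n in sequentially. norm (A (xs n)) \<le> s" using s_ge xs(1) by (intro always_eventually allI) auto
    show "(\<lambda>n. s - 1 / (real n + 1)) \<longlonglongrightarrow> s" using tendsto_diff[OF tendsto_const lim1, of s] by simp
  qed simp
  define D where "D n = A (A (xs n)) - (s^2) *\<^sub>R xs n" for n
  have keyD: "(norm (D n))^2 \<le> s^2 * (s^2 - (norm (A (xs n)))^2)" for n
  proof -
    let ?v = "xs n"
    have i1: "inner (A (A ?v)) ?v = (norm (A ?v))^2" by (simp add: sym power2_norm_eq_inner)
    have n1: "norm (A (A ?v)) \<le> s * norm (A ?v)" using bound invX xsX by blast
    then have n1': "(norm (A (A ?v)))^2 \<le> s^2 * (norm (A ?v))^2"
      by (metis norm_ge_zero power_mono power_mult_distrib)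
    have n2: "(norm ?v)^2 \<le> 1" using xs1 by (simp add: power_le_one)
    have "(norm (D n))^2 = (norm (A (A ?v)))^2 - 2 * s^2 * inner (A (A ?v)) ?v + s^2 * s^2 * (norm ?v)^2"
      unfolding D_def norm_diff_scaleR_sq by (simp add: power2_eq_square)
    also have "\<dots> \<le> s^2 * (norm (A ?v))^2 - 2 * s^2 * (norm (A ?v))^2 + s^2 * s^2"
    proof -
      have "s^2 * s^2 * (norm ?v)^2 \<le> s^2 * s^2" using n2 by (simp add: mult_left_le)
      then show ?thesis using n1' unfolding i1 by linarith
    qed
    also have "\<dots> = s^2 * (s^2 - (norm (A ?v))^2)" by (simp add: algebra_simps)
    finally show ?thesis .
  qed
  have D0: "D \<longlonglongrightarrow> 0"
  proof -
    have "(\<lambda>n. s^2 * (s^2 - (norm (A (xs n)))^2)) \<longlonglongrightarrow> s^2 * (s^2 - s^2)"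
      using nA by (intro tendsto_intros)
    then have a: "(\<lambda>n. s^2 * (s^2 - (norm (A (xs n)))^2)) \<longlonglongrightarrow> 0" by simp
    have "(\<lambda>n. (norm (D n))^2) \<longlonglongrightarrow> 0"
      by (rule tendsto_sandwich[OF _ _ tendsto_const a]) (use keyD in \<open>auto intro!: always_eventually\<close>)
    then have "(\<lambda>n. sqrt ((norm (D n))^2)) \<longlonglongrightarrow> sqrt 0" by (intro tendsto_intros)
    then have "(\<lambda>n. norm (D n)) \<longlonglongrightarrow> 0" by simp
    then show ?thesis by (simp add: tendsto_norm_zero_iff)
  qed
  obtain r y where r: "strict_mono r" "(\<lambda>n. A (xs (r n))) \<longlonglongrightarrow> y" using cpt[of xs] xs1 by blast
  have "(\<lambda>n. A (A (xs (r n)))) \<longlonglongrightarrow> A y" using r(2) by (rule A.tendsto)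
  moreover have "(\<lambda>n. D (r n)) \<longlonglongrightarrow> 0" using LIMSEQ_subseq_LIMSEQ[OF D0 r(1)] by (simp add: comp_def)
  ultimately have "(\<lambda>n. A (A (xs (r n))) - D (r n)) \<longlonglongrightarrow> A y - 0" by (intro tendsto_intros)
  then have "(\<lambda>n. (s^2) *\<^sub>R xs (r n)) \<longlonglongrightarrow> A y" by (simp add: D_def)
  then have "(\<lambda>n. (1 / s^2) *\<^sub>R ((s^2) *\<^sub>R xs (r n))) \<longlonglongrightarrow> (1 / s^2) *\<^sub>R A y" by (intro tendsto_intros)
  then have zlim: "(\<lambda>n. xs (r n)) \<longlonglongrightarrow> (1 / s^2) *\<^sub>R A y" using s0 by simp
  define z where "z = (1 / s^2) *\<^sub>R A y"
  have zX: "z \<in> X" using closed_sequentially[OF clX _ zlim] xsX z_def by blast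
  have Az: "A z = y"
  proof -
    have "(\<lambda>n. A (xs (r n))) \<longlonglongrightarrow> A z" using zlim z_def A.tendsto by simp
    then show ?thesis using r(2) LIMSEQ_unique by blast
  qed
  have ny: "norm y = s"
  proof -
    have "(\<lambda>n. norm (A (xs (r n)))) \<longlonglongrightarrow> norm y" using r(2) by (intro tendsto_intros)
    moreover have "(\<lambda>n. norm (A (xs (r n)))) \<longlonglongrightarrow> s" using LIMSEQ_subseq_LIMSEQ[OF nA r(1)] by (simp add: comp_def)
    ultimately show ?thesis using LIMSEQ_unique by blast
  qed
  have z0: "z \<noteq> 0" using Az ny s0 A.zero by auto
  have AAz: "A (A z) = (s^2) *\<^sub>R z" using Az s0 by (simp add: z_def)
  define w where "w = A z + s *\<^sub>R z"
  have wX: "w \<in> X" using zX invX subX by (simp add: w_def subspace_add subspace_scale)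
  show ?thesis
  proof (cases "w = 0")
    case True
    then have "A z = (- s) *\<^sub>R z" by (simp add: w_def eq_neg_iff_add_eq_0)
    then show ?thesis using zX z0 by blast
  next
    case False
    have "A w = s *\<^sub>R w" by (simp add: w_def A.add A.scaleR AAz algebra_simps power2_eq_square)
    then show ?thesis using wX False by blast
  qed
qed



lemma adj_isometry_contr:
  assumes "is_isometry V"
  shows "norm (adj V x) \<le> norm x"
proof -
  have cl: "clinear_op V" using assms by (simp add: is_isometry_def)
  have "(norm (adj V x))^2 = inner (V (adj V x)) x"
    by (simp add: adj_inner[OF cl] power2_norm_eq_inner)
  also have "\<dots> \<le> norm (V (adj V x)) * norm x" by (rule norm_cauchy_schwarz)
  also have "\<dots> = norm (adj V x) * norm x" using assms by (simp add: is_isometry_def)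
  finally have "norm (adj V x) * norm (adj V x) \<le> norm (adj V x) * norm x" by (simp add: power2_eq_square)
  then show ?thesis by (cases "adj V x = 0") (auto simp: mult_le_cancel_left)
qed

locale cnp =
  fixes V1 V2 :: "'a::chilbert_space \<Rightarrow> 'a"
  assumes cnp: "compact_normal_pair V1 V2"
begin

abbreviation "A1 \<equiv> adj V1"
abbreviation "A2 \<equiv> adj V2"
abbreviation "T \<equiv> commut V1 V2"
abbreviation "T' \<equiv> adj (commut V1 V2)"

lemma iso1: "is_isometry V1" and iso2: "is_isometry V2"
  using cnp by (auto simp: compact_normal_pair_def bcl_pair_def isometric_pair_def)

lemma cl1: "clinear_op V1" and cl2: "clinear_op V2"
  using iso1 iso2 by (auto simp: is_isometry_def)

lemma clA1: "clinear_op A1" and clA2: "clinear_op A2"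
  using adj_clinear cl1 cl2 by auto

lemma comm_fun: "V1 \<circ> V2 = V2 \<circ> V1"
  using cnp by (auto simp: compact_normal_pair_def bcl_pair_def isometric_pair_def)

lemma comm: "V1 (V2 x) = V2 (V1 x)"
  using comm_fun by (metis comp_apply)

lemma shift: "(\<lambda>m. (adj (V1 \<circ> V2) ^^ m) x) \<longlonglongrightarrow> 0"
  using cnp by (auto simp: compact_normal_pair_def bcl_pair_def is_shift_def)

lemma clT: "clinear_op T" and compT: "compact_op T" and normalT: "T \<circ> T' = T' \<circ> T"
  using cnp by (auto simp: compact_normal_pair_def normal_op_def compact_op_def)

lemma clT': "clinear_op T'" using adj_clinear clT by blast

lemma normal: "T (T' x) = T' (T x)"
  using normalT by (metis comp_apply)

lemma A1V1[simp]: "A1 (V1 x) = x" and A2V2[simp]: "A2 (V2 x) = x"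
  using isometry_adj_left iso1 iso2 by auto

lemma Acomm: "A1 (A2 x) = A2 (A1 x)"
proof -
  have "adj (V1 \<circ> V2) = adj (V2 \<circ> V1)" using comm_fun by simp
  then have "A2 \<circ> A1 = A1 \<circ> A2" using adj_comp cl1 cl2 by metis
  then show ?thesis by (metis comp_apply)
qed

lemma T_eq: "T x = A2 (V1 x) - V1 (A2 x)"
  by (simp add: commut_def)

lemma T'_eq: "T' x = A1 (V2 x) - V2 (A1 x)"
proof -
  have "T' = (\<lambda>x. A1 (V2 x) - V2 (A1 x))"
  proof (rule adj_eqI[OF clT])
    fix x y
    have a: "cinner (A2 (V1 x)) y = cinner x (A1 (V2 y))"
      using adj_prop2[OF cl2, of "V1 x" y] adj_prop[OF cl1, of x "V2 y"] by simp
    have b: "cinner (V1 (A2 x)) y = cinner x (V2 (A1 y))"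
      using adj_prop[OF cl1, of "A2 x" y] adj_prop2[OF cl2, of x "A1 y"] by simp
    show "cinner (T x) y = cinner x (A1 (V2 y) - V2 (A1 y))"
      by (simp add: T_eq cinner_diff_left cinner_diff_right a b)
  qed
  then show ?thesis by simp
qed

lemma TV2[simp]: "T (V2 x) = 0"
  by (simp add: T_eq comm)

lemma T'V1[simp]: "T' (V1 x) = 0"
  by (simp add: T'_eq comm[symmetric])

lemma normT: "norm (T x) = norm (T' x)"
proof -
  have "(norm (T x))^2 = inner x (T' (T x))" by (simp add: adj_inner[OF clT] power2_norm_eq_inner)
  also have "\<dots> = inner x (T (T' x))" by (simp add: normal)
  also have "\<dots> = (norm (T' x))^2" by (simp add: adj_inner2[OF clT] power2_norm_eq_inner)
  finally show ?thesis by (simp add: power2_eq_iff_nonneg)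
qed

lemma TV1[simp]: "T (V1 x) = 0"
  using normT[of "V1 x"] by simp

lemma T'V2[simp]: "T' (V2 x) = 0"
  using normT[of "V2 x"] by simp

lemma A1_contr: "norm (A1 x) \<le> norm x" and A2_contr: "norm (A2 x) \<le> norm x"
  using adj_isometry_contr iso1 iso2 by auto

lemma E1_eq: "E1 V1 V2 = {x. A1 x = 0 \<and> A2 x = 0}"
proof (intro set_eqI iffI)
  fix x assume "x \<in> E1 V1 V2"
  then have "defect_op V1 V2 x - x = 0" by (simp add: E1_def)
  then have eq: "V1 (V2 (A1 (A2 x))) = V1 (A1 x) + V2 (A2 x)"
    by (simp add: defect_op_def algebra_simps)
  have "inner x (V1 (V2 (A1 (A2 x)))) = (norm (A1 (A2 x)))^2"
    by (simp add: adj_inner2[OF cl1] adj_inner2[OF cl2] Acomm power2_norm_eq_inner)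
  moreover have "inner x (V1 (A1 x) + V2 (A2 x)) = (norm (A1 x))^2 + (norm (A2 x))^2"
    by (simp add: inner_add_right adj_inner2[OF cl1] adj_inner2[OF cl2] power2_norm_eq_inner)
  ultimately have e2: "(norm (A1 (A2 x)))^2 = (norm (A1 x))^2 + (norm (A2 x))^2" using eq by simp
  have "(norm (A1 (A2 x)))^2 \<le> (norm (A2 x))^2" using A1_contr by (simp add: power_mono)
  then have "(norm (A1 x))^2 \<le> 0" using e2 by simp
  then have a1: "A1 x = 0" by simp
  then have "A1 (A2 x) = 0" using Acomm clinear_op_simps(4)[OF clA2] by simp
  then have "(norm (A2 x))^2 = 0" using e2 a1 by simp
  then show "x \<in> {x. A1 x = 0 \<and> A2 x = 0}" using a1 by simp
next
  fix x assume "x \<in> {x. A1 x = 0 \<and> A2 x = 0}"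
  then show "x \<in> E1 V1 V2"
    by (simp add: E1_def defect_op_def clinear_op_simps(4)[OF clA1] clinear_op_simps(4)[OF cl1]
        clinear_op_simps(4)[OF cl2])
qed

lemma A1_T[simp]: "A1 (T x) = 0"
  by (simp add: T_eq clinear_op_simps[OF clA1] Acomm)

lemma A2_T[simp]: "A2 (T x) = 0"
proof (rule cinner_ext_left)
  fix z
  have "cinner (A2 (T x)) z = cinner (T x) (V2 z)" by (simp add: adj_prop2[OF cl2])
  also have "\<dots> = cinner x (T' (V2 z))" by (simp add: adj_prop[OF clT])
  finally show "cinner (A2 (T x)) z = cinner 0 z" by simp
qed

lemma A2_T'[simp]: "A2 (T' x) = 0"
  by (simp add: T'_eq clinear_op_simps[OF clA2] Acomm[symmetric])

lemma A1_T'[simp]: "A1 (T' x) = 0"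
proof (rule cinner_ext_left)
  fix z
  have "cinner (A1 (T' x)) z = cinner (T' x) (V1 z)" by (simp add: adj_prop2[OF cl1])
  also have "\<dots> = cinner x (T (V1 z))" using adj_prop2[OF clT, of x "V1 z"] by simp
  finally show "cinner (A1 (T' x)) z = cinner 0 z" by simp
qed

lemma T_orth:
  assumes "\<And>e. e \<in> E1 V1 V2 \<Longrightarrow> cinner x e = 0"
  shows "T x = 0" "T' x = 0"
proof -
  have "T (T' x) \<in> E1 V1 V2" by (simp add: E1_eq)
  then have "inner x (T (T' x)) = 0" using assms by (metis Re_cinner zero_complex.simps(1))
  then have "inner (T x) (T x) = 0" by (simp add: adj_inner[OF clT] normal)
  then show "T x = 0" by simp
  then show "T' x = 0" using normT[of x] by simp
qed

lemma eig_adj: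
  assumes "T f = cscale \<mu> f"
  shows "T' f = cscale (cnj \<mu>) f"
proof -
  define d where "d = T' f - cscale (cnj \<mu>) f"
  have c1: "cinner (T' f) (T' f) = \<mu> * cnj \<mu> * cinner f f"
  proof -
    have "cinner (T' f) (T' f) = cinner (T f) (T f)" by (simp add: cinner_self normT)
    then show ?thesis by (simp add: assms cinner_cscale_left cinner_cscale_right)
  qed
  have c2: "cinner (T' f) f = cnj \<mu> * cinner f f"
    by (simp add: adj_prop2[OF clT, symmetric] assms cinner_cscale_right)
  have c3: "cinner f (T' f) = \<mu> * cinner f f"
    by (simp add: adj_prop[OF clT, symmetric] assms cinner_cscale_left)
  have "cinner d d = cinner (T' f) (T' f) - \<mu> * cinner (T' f) f - cnj \<mu> * cinner f (T' f)
      + cnj \<mu> * \<mu> * cinner f f"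
    by (simp add: d_def cinner_diff_left cinner_diff_right cinner_cscale_left cinner_cscale_right
        algebra_simps)
  also have "\<dots> = 0" by (simp add: c1 c2 c3 algebra_simps)
  finally show ?thesis by (simp add: d_def)
qed


lemma A1V2: "A1 (V2 x) = T' x + V2 (A1 x)" by (simp add: T'_eq)
lemma A2V1: "A2 (V1 x) = T x + V1 (A2 x)" by (simp add: T_eq)

lemma pow1_V2: "(V1 ^^ m) (V2 y) = V2 ((V1 ^^ m) y)"
  by (induction m) (auto simp: comm)

definition gens :: "'a \<Rightarrow> 'a set" where
  "gens f = {(V1 ^^ m) ((V2 ^^ n) f) | m n. True}"

lemma gen_subspace_eq: "gen_subspace V1 V2 f = closure (cspan (gens f))"
  by (simp add: gen_subspace_def gens_def)

lemma gensI: "(V1 ^^ m) ((V2 ^^ n) f) \<in> gens f"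
  unfolding gens_def by blast

lemma f_in_gens: "f \<in> gens f"
  using gensI[of 0 0 f] by simp

lemma f_in_H: "f \<in> gen_subspace V1 V2 f"
  using f_in_gens ccspan_superset gen_subspace_eq by blast

definition eigE :: "'a \<Rightarrow> bool" where
  "eigE f \<longleftrightarrow> A1 f = 0 \<and> A2 f = 0 \<and> (\<exists>\<mu>. T f = cscale \<mu> f)"

lemma A1_V2pow:
  assumes "A1 f = 0" "T f = cscale \<mu> f"
  shows "A1 ((V2 ^^ Suc n) f) = cscale (cnj \<mu>) ((V2 ^^ n) f)"
proof (induction n)
  case 0
  then show ?case using assms eig_adj[OF assms(2)] by (simp add: A1V2 clinear_op_simps(4)[OF cl2])
next
  case (Suc n)
  have "A1 ((V2 ^^ Suc (Suc n)) f) = T' (V2 ((V2 ^^ n) f)) + V2 (A1 ((V2 ^^ Suc n) f))"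
    by (simp add: A1V2)
  also have "\<dots> = cscale (cnj \<mu>) ((V2 ^^ Suc n) f)"
    using Suc by (simp add: clinear_op_simps(6)[OF cl2])
  finally show ?case .
qed

lemma A2_V1pow:
  assumes "A2 f = 0" "T f = cscale \<mu> f"
  shows "A2 ((V1 ^^ Suc n) f) = cscale \<mu> ((V1 ^^ n) f)"
proof (induction n)
  case 0
  then show ?case using assms by (simp add: A2V1 clinear_op_simps(4)[OF cl1])
next
  case (Suc n)
  have "A2 ((V1 ^^ Suc (Suc n)) f) = T (V1 ((V1 ^^ n) f)) + V1 (A2 ((V1 ^^ Suc n) f))"
    by (simp add: A2V1)
  also have "\<dots> = cscale \<mu> ((V1 ^^ Suc n) f)"
    using Suc by (simp add: clinear_op_simps(6)[OF cl1])
  finally show ?case .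
qed

lemma gens_inv:
  assumes e: "eigE f" and x: "x \<in> gens f"
  shows "V1 x \<in> cspan (gens f)" "V2 x \<in> cspan (gens f)" "A1 x \<in> cspan (gens f)" "A2 x \<in> cspan (gens f)"
proof -
  obtain \<mu> where f: "A1 f = 0" "A2 f = 0" "T f = cscale \<mu> f" using e by (auto simp: eigE_def)
  obtain m n where xmn: "x = (V1 ^^ m) ((V2 ^^ n) f)" using x by (auto simp: gens_def)
  have sub: "gens f \<subseteq> cspan (gens f)" by (rule cspan_superset)
  have cs: "csubspace (cspan (gens f))" by (rule cspan_csubspace)
  show "V1 x \<in> cspan (gens f)" using gensI[of "Suc m" n f] sub xmn by auto
  show "V2 x \<in> cspan (gens f)" using gensI[of m "Suc n" f] sub xmn by (auto simp: pow1_V2)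
  show "A1 x \<in> cspan (gens f)"
  proof (cases m)
    case (Suc m')
    then show ?thesis using gensI[of m' n f] sub xmn by auto
  next
    case 0
    show ?thesis
    proof (cases n)
      case 0
      then show ?thesis using \<open>m = 0\<close> xmn f csubspace_0[OF cs] by simp
    next
      case (Suc n')
      then have "A1 x = cscale (cnj \<mu>) ((V2 ^^ n') f)" using \<open>m = 0\<close> xmn A1_V2pow[OF f(1,3)] by simp
      moreover have "(V2 ^^ n') f \<in> cspan (gens f)" using gensI[of 0 n' f] sub by auto
      ultimately show ?thesis using csubspace_cscale[OF cs] by simp
    qed
  qed
  show "A2 x \<in> cspan (gens f)"
  proof (cases n)
    case (Suc n')
    then have "A2 x = (V1 ^^ m) ((V2 ^^ n') f)" using xmn by (simp add: pow1_V2)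
    then show ?thesis using gensI[of m n' f] sub by auto
  next
    case 0
    show ?thesis
    proof (cases m)
      case 0
      then show ?thesis using \<open>n = 0\<close> xmn f csubspace_0[OF cs] by simp
    next
      case (Suc m')
      then have "A2 x = cscale \<mu> ((V1 ^^ m') f)" using \<open>n = 0\<close> xmn A2_V1pow[OF f(2,3)] by simp
      moreover have "(V1 ^^ m') f \<in> cspan (gens f)" using gensI[of m' 0 f] sub by auto
      ultimately show ?thesis using csubspace_cscale[OF cs] by simp
    qed
  qed
qed

lemma H_inv:
  assumes e: "eigE f" and x: "x \<in> gen_subspace V1 V2 f"
  shows "V1 x \<in> gen_subspace V1 V2 f" "V2 x \<in> gen_subspace V1 V2 f"
    "A1 x \<in> gen_subspace V1 V2 f" "A2 x \<in> gen_subspace V1 V2 f"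
proof -
  have M: "closed_csubspace (closure (cspan (gens f)))" by (rule closed_csubspace_ccspan)
  have sub: "cspan (gens f) \<subseteq> closure (cspan (gens f))" by (rule closure_subset)
  show "V1 x \<in> gen_subspace V1 V2 f" using x unfolding gen_subspace_eq
    by (rule ccspan_invariant[OF cl1 M, rotated]) (use gens_inv(1)[OF e] sub in blast)
  show "V2 x \<in> gen_subspace V1 V2 f" using x unfolding gen_subspace_eq
    by (rule ccspan_invariant[OF cl2 M, rotated]) (use gens_inv(2)[OF e] sub in blast)
  show "A1 x \<in> gen_subspace V1 V2 f" using x unfolding gen_subspace_eq
    by (rule ccspan_invariant[OF clA1 M, rotated]) (use gens_inv(3)[OF e] sub in blast)
  show "A2 x \<in> gen_subspace V1 V2 f" using x unfolding gen_subspace_eq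
    by (rule ccspan_invariant[OF clA2 M, rotated]) (use gens_inv(4)[OF e] sub in blast)
qed

lemma H_reducing:
  assumes e: "eigE f"
  shows "reducing V1 V2 (gen_subspace V1 V2 f)"
  unfolding reducing_def using H_inv[OF e] closed_csubspace_ccspan[of "gens f"]
  by (auto simp: gen_subspace_eq)

lemma gens_orth_E1:
  assumes g: "A1 g = 0" "A2 g = 0" "cinner f g = 0" and x: "x \<in> gens f"
  shows "cinner x g = 0"
proof -
  obtain m n where xmn: "x = (V1 ^^ m) ((V2 ^^ n) f)" using x by (auto simp: gens_def)
  show ?thesis
  proof (cases m)
    case (Suc m')
    then have "cinner x g = cinner ((V1 ^^ m') ((V2 ^^ n) f)) (A1 g)" using xmn by (simp add: adj_prop[OF cl1])
    then show ?thesis using g by simp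
  next
    case 0
    show ?thesis
    proof (cases n)
      case (Suc n')
      then have "cinner x g = cinner ((V2 ^^ n') f) (A2 g)" using xmn \<open>m = 0\<close> by (simp add: adj_prop[OF cl2])
      then show ?thesis using g by simp
    qed (use xmn \<open>m = 0\<close> g in simp)
  qed
qed

lemma H_orth:
  assumes ef: "eigE f" and eg: "eigE g" and fg: "cinner f g = 0"
  shows "gen_subspace V1 V2 g \<subseteq> orth_compl (gen_subspace V1 V2 f)"
proof -
  have g0: "A1 g = 0" "A2 g = 0" using eg by (auto simp: eigE_def)
  have base: "gen_subspace V1 V2 f \<subseteq> orth_compl {g}"
    unfolding gen_subspace_eq
    by (rule orth_compl_ccspan) (use gens_orth_E1[OF g0 fg] in \<open>auto simp: orth_compl_def\<close>)
  have P: "\<forall>u \<in> gen_subspace V1 V2 f. cinner u ((V1 ^^ c) ((V2 ^^ d) g)) = 0" for c d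
  proof (induction c)
    case 0
    show ?case
    proof (induction d)
      case 0
      then show ?case using base by (auto simp: orth_compl_def)
    next
      case (Suc d)
      show ?case
      proof
        fix u assume u: "u \<in> gen_subspace V1 V2 f"
        have "cinner u ((V1 ^^ 0) ((V2 ^^ Suc d) g)) = cinner (A2 u) ((V2 ^^ d) g)"
          by (simp add: adj_prop2[OF cl2])
        then show "cinner u ((V1 ^^ 0) ((V2 ^^ Suc d) g)) = 0"
          using Suc H_inv(4)[OF ef u] by simp
      qed
    qed
  next
    case (Suc c)
    show ?case
    proof
      fix u assume u: "u \<in> gen_subspace V1 V2 f"
      have "cinner u ((V1 ^^ Suc c) ((V2 ^^ d) g)) = cinner (A1 u) ((V1 ^^ c) ((V2 ^^ d) g))"
        by (simp add: adj_prop2[OF cl1])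
      then show "cinner u ((V1 ^^ Suc c) ((V2 ^^ d) g)) = 0"
        using Suc H_inv(3)[OF ef u] by simp
    qed
  qed
  have "gens g \<subseteq> orth_compl (gen_subspace V1 V2 f)"
  proof
    fix x assume "x \<in> gens g"
    then obtain c d where "x = (V1 ^^ c) ((V2 ^^ d) g)" by (auto simp: gens_def)
    then have "\<forall>u \<in> gen_subspace V1 V2 f. cinner u x = 0" using P by blast
    then have "cinner x u = 0" if "u \<in> gen_subspace V1 V2 f" for u
      using that cinner_commute[where x=u and y=x] by simp
    then show "x \<in> orth_compl (gen_subspace V1 V2 f)" by (simp add: orth_compl_def)
  qed
  then show ?thesis unfolding gen_subspace_eq[of g] by (rule orth_compl_ccspan)
qed


lemma gens_subset:
  assumes "f \<in> S" "\<And>x. x \<in> S \<Longrightarrow> V1 x \<in> S" "\<And>x. x \<in> S \<Longrightarrow> V2 x \<in> S"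
  shows "gens f \<subseteq> S"
proof -
  have n: "(V2 ^^ n) f \<in> S" for n by (induction n) (use assms in auto)
  have "(V1 ^^ m) ((V2 ^^ n) f) \<in> S" for m n by (induction m) (use assms n in auto)
  then show ?thesis by (auto simp: gens_def)
qed

lemma orth_compl_inv:
  assumes red: "reducing V1 V2 N" and q: "q \<in> orth_compl N"
  shows "V1 q \<in> orth_compl N" "V2 q \<in> orth_compl N" "A1 q \<in> orth_compl N" "A2 q \<in> orth_compl N"
proof -
  have inv: "\<And>n. n \<in> N \<Longrightarrow> V1 n \<in> N" "\<And>n. n \<in> N \<Longrightarrow> V2 n \<in> N"
    "\<And>n. n \<in> N \<Longrightarrow> A1 n \<in> N" "\<And>n. n \<in> N \<Longrightarrow> A2 n \<in> N"
    using red by (auto simp: reducing_def)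
  have q0: "\<And>n. n \<in> N \<Longrightarrow> cinner q n = 0" using q by (auto simp: orth_compl_def)
  show "V1 q \<in> orth_compl N" unfolding orth_compl_def
    using q0 inv(3) by (auto simp: adj_prop[OF cl1])
  show "V2 q \<in> orth_compl N" unfolding orth_compl_def
    using q0 inv(4) by (auto simp: adj_prop[OF cl2])
  show "A1 q \<in> orth_compl N" unfolding orth_compl_def
  proof (intro CollectI ballI)
    fix n assume "n \<in> N"
    then show "cinner (A1 q) n = 0" using q0 inv(1) adj_prop2[OF cl1, of q n] by simp
  qed
  show "A2 q \<in> orth_compl N" unfolding orth_compl_def
  proof (intro CollectI ballI)
    fix n assume "n \<in> N"
    then show "cinner (A2 q) n = 0" using q0 inv(2) adj_prop2[OF cl2, of q n] by simp
  qed
qed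

lemma H_irreducible:
  assumes e: "eigE f" and nf: "norm f = 1"
  shows "irreducible_on V1 V2 (gen_subspace V1 V2 f)"
  unfolding irreducible_on_def
proof (intro allI impI)
  fix N assume NH: "N \<subseteq> gen_subspace V1 V2 f" and red: "reducing V1 V2 N"
  define H where "H = gen_subspace V1 V2 f"
  have Ncs: "closed_csubspace N" and csN: "csubspace N" using red by (auto simp: reducing_def closed_csubspace_def)
  have inv: "\<And>n. n \<in> N \<Longrightarrow> V1 n \<in> N" "\<And>n. n \<in> N \<Longrightarrow> V2 n \<in> N"
    "\<And>n. n \<in> N \<Longrightarrow> A1 n \<in> N" "\<And>n. n \<in> N \<Longrightarrow> A2 n \<in> N"
    using red by (auto simp: reducing_def)
  have Hcs: "closed_csubspace H" "csubspace H" unfolding H_def gen_subspace_eq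
    using closed_csubspace_ccspan by (auto simp: closed_csubspace_def)
  have f0: "A1 f = 0" "A2 f = 0" using e by (auto simp: eigE_def)
  obtain p q where pq: "f = p + q" "p \<in> N" "q \<in> orth_compl N" using proj_decomp[OF Ncs] by blast
  have ocs: "csubspace (orth_compl N)" using orth_compl_closed_csubspace by (auto simp: closed_csubspace_def)
  have Ap: "A1 p = 0" "A2 p = 0"
  proof -
    have "A1 p = - A1 q" using f0 pq(1) clinear_op_simps(1)[OF clA1, of p q] by (simp add: eq_neg_iff_add_eq_0)
    then have "A1 p \<in> orth_compl N" using orth_compl_inv(3)[OF red pq(3)] csubspace_minus[OF ocs] by simp
    then show "A1 p = 0" using inv(3)[OF pq(2)] orth_compl_self by blast
    have "A2 p = - A2 q" using f0 pq(1) clinear_op_simps(1)[OF clA2, of p q] by (simp add: eq_neg_iff_add_eq_0)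
    then have "A2 p \<in> orth_compl N" using orth_compl_inv(4)[OF red pq(3)] csubspace_minus[OF ocs] by simp
    then show "A2 p = 0" using inv(4)[OF pq(2)] orth_compl_self by blast
  qed
  have pH: "p \<in> H" using NH pq(2) H_def by blast
  have fH: "f \<in> H" using f_in_H H_def by simp
  have ff: "cinner f f = 1" using nf by (simp add: cinner_self)
  define c where "c = cinner p f"
  define r where "r = p - cscale c f"
  have Ar: "A1 r = 0" "A2 r = 0"
    by (simp_all add: r_def clinear_op_simps[OF clA1] clinear_op_simps[OF clA2] Ap f0)
  have fr: "cinner f r = 0"
  proof -
    have "cinner f p = cnj c" unfolding c_def by (rule cinner_commute)
    then show ?thesis by (simp add: r_def cinner_diff_right cinner_cscale_right ff)
  qed
  have "gens f \<subseteq> orth_compl {r}" using gens_orth_E1[OF Ar fr] by (auto simp: orth_compl_def)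
  then have "H \<subseteq> orth_compl {r}" unfolding H_def gen_subspace_eq by (rule orth_compl_ccspan)
  moreover have "r \<in> H" unfolding r_def using pH fH Hcs(2) csubspace_diff csubspace_cscale by blast
  ultimately have "r = 0" using orth_compl_self by blast
  then have pc: "p = cscale c f" by (simp add: r_def)
  have "q = f - p" using pq(1) by simp
  then have qc: "q = cscale (1 - c) f" using pc by (simp add: cscale_diff_left)
  have "cinner q p = 0" using pq by (auto simp: orth_compl_def)
  moreover have "cinner q p = (1 - c) * (cnj c * cinner f f)"
    unfolding pc qc by (simp add: cinner_cscale_left cinner_cscale_right algebra_simps)
  ultimately have "(1 - c) * cnj c = 0" using ff by simp
  then have "c = 0 \<or> c = 1" by auto
  then have "c = 1 \<or> c = 0" by blast
  then show "N = {0} \<or> N = gen_subspace V1 V2 f"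
  proof
    assume "c = 1"
    then have "f \<in> N" using pc pq(2) by simp
    then have "gens f \<subseteq> N" using gens_subset inv by blast
    then have "H \<subseteq> N" unfolding H_def gen_subspace_eq by (rule ccspan_minimal[OF Ncs])
    then show ?thesis using NH H_def by blast
  next
    assume "c = 0"
    then have "f \<in> orth_compl N" using pq qc by simp
    then have "gens f \<subseteq> orth_compl N" using gens_subset orth_compl_inv[OF red] by blast
    then have "H \<subseteq> orth_compl N" unfolding H_def gen_subspace_eq by (rule orth_compl_ccspan)
    then have "\<forall>n\<in>N. n = 0" using NH H_def orth_compl_self by blast
    then show ?thesis using csubspace_0[OF csN] by blast
  qed
qed

end



context cnp begin

lemma T'T: "adj T' = T" using adj_adj clT by blast

lemma T'_inner: "inner (T' x) y = inner x (T y)"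
  using adj_inner[OF clT', of x y] T'T by simp

lemma Cauchy_transfer:
  assumes "Cauchy X" "\<And>m n. dist (Y m) (Y n) = dist (X m) (X n)"
  shows "Cauchy Y"
  using assms unfolding Cauchy_def by simp

lemma cpt_TT':
  assumes x: "\<forall>n::nat. norm (x n) \<le> 1"
  shows "\<exists>r. strict_mono r \<and> convergent (\<lambda>n. T (x (r n))) \<and> convergent (\<lambda>n. T' (x (r n)))"
proof -
  have cpt: "compact (closure (T ` ball 0 1))" using compT by (simp add: compact_op_def)
  define y where "y n = T ((1/2) *\<^sub>R x n)" for n
  have "\<forall>n. y n \<in> closure (T ` ball 0 1)"
  proof
    fix n
    have "norm (x n) < 2" using x[rule_format, of n] by linarith
    then have "(1/2) *\<^sub>R x n \<in> ball 0 1" by simp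
    then have "y n \<in> T ` ball 0 1" unfolding y_def by (rule imageI)
    then show "y n \<in> closure (T ` ball 0 1)" by (rule closure_subset[THEN subsetD])
  qed
  then obtain l r where r: "strict_mono r" "(y \<circ> r) \<longlonglongrightarrow> l"
    using seq_compactE[OF compact_imp_seq_compact[OF cpt]] by metis
  have "(\<lambda>n. 2 *\<^sub>R y (r n)) \<longlonglongrightarrow> 2 *\<^sub>R l" using r(2) by (intro tendsto_intros) (simp add: comp_def)
  moreover have "2 *\<^sub>R y (r n) = T (x (r n))" for n by (simp add: y_def clinear_op_simps(5)[OF clT])
  ultimately have c1: "convergent (\<lambda>n. T (x (r n)))" unfolding convergent_def by auto
  have "Cauchy (\<lambda>n. T (x (r n)))" using c1 convergent_Cauchy by blast
  moreover have "dist (T' (x (r m))) (T' (x (r n))) = dist (T (x (r m))) (T (x (r n)))" for m n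
    by (simp add: dist_norm clinear_op_simps(2)[OF clT, symmetric] clinear_op_simps(2)[OF clT', symmetric] normT)
  ultimately have "Cauchy (\<lambda>n. T' (x (r n)))" by (rule Cauchy_transfer)
  then have "convergent (\<lambda>n. T' (x (r n)))" by (simp add: Cauchy_convergent_iff)
  then show ?thesis using r(1) c1 by blast
qed

definition opA :: "'a \<Rightarrow> 'a" where "opA x = (1/2) *\<^sub>R (T x + T' x)"
definition opB :: "'a \<Rightarrow> 'a" where "opB x = (1/2) *\<^sub>R ii (T' x - T x)"

lemma half_lemma: "(1/2) *\<^sub>R (v + w) + (1/2) *\<^sub>R (v - w) = (v::'b::real_vector)"
proof -
  have "(1/2) *\<^sub>R (v + w) + (1/2) *\<^sub>R (v - w) = (1/2) *\<^sub>R ((v + w) + (v - w))"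
    by (simp only: scaleR_add_right)
  also have "(v + w) + (v - w) = v + v" by simp
  finally show ?thesis by simp
qed

lemma T_decomp: "T x = opA x + ii (opB x)"
proof -
  have "ii (opB x) = (1/2) *\<^sub>R (T x - T' x)"
    by (simp add: opB_def cscale_scaleR_right)
  then show ?thesis by (simp add: opA_def half_lemma)
qed

lemma ii_add: "ii (x + y) = ii x + ii y" by (rule cscale_add_right)
lemma ii_diff: "ii (x - y) = ii x - ii y" by (rule cscale_diff_right)

lemma opA_bl: "bounded_linear opA"
proof -
  have "bounded_linear (\<lambda>x. T x + T' x)"
    using clinear_opD(1)[OF clT] clinear_opD(1)[OF clT'] by (rule bounded_linear_add)
  then show ?thesis unfolding opA_def by (rule bounded_linear_compose[OF bounded_linear_scaleR_right])
qed

lemma opB_bl: "bounded_linear opB"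
proof -
  have "bounded_linear (\<lambda>x. T' x - T x)"
    using clinear_opD(1)[OF clT'] clinear_opD(1)[OF clT] by (rule bounded_linear_sub)
  then have "bounded_linear (\<lambda>x. ii (T' x - T x))" by (rule bounded_linear_compose[OF cscale_bounded_linear])
  then show ?thesis unfolding opB_def by (rule bounded_linear_compose[OF bounded_linear_scaleR_right])
qed

lemma opA_sym: "inner (opA x) y = inner x (opA y)"
  by (simp add: opA_def inner_add_left inner_add_right adj_inner[OF clT] T'_inner algebra_simps)

lemma opB_sym: "inner (opB x) y = inner x (opB y)"
proof -
  have "inner (opB x) y = - (1/2) * inner (T' x - T x) (ii y)"
    by (simp add: opB_def inner_ii_left)
  also have "\<dots> = - (1/2) * (inner x (T (ii y)) - inner x (T' (ii y)))"
    by (simp add: inner_diff_left T'_inner adj_inner[OF clT])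
  also have "\<dots> = (1/2) * inner x (ii (T' y - T y))"
    by (simp add: clinear_op_simps(6)[OF clT] clinear_op_simps(6)[OF clT'] ii_diff inner_diff_right algebra_simps)
  also have "\<dots> = inner x (opB y)" by (simp add: opB_def)
  finally show ?thesis .
qed

lemma opAB_comm: "opA (opB x) = opB (opA x)"
proof -
  have lT: "T (ii y) = ii (T y)" "T' (ii y) = ii (T' y)" for y
    using clinear_op_simps(6)[OF clT] clinear_op_simps(6)[OF clT'] by auto
  have "opA (opB x) = (1/4) *\<^sub>R ii (T' (T' x) - T (T x))"
    by (simp add: opA_def opB_def clinear_op_simps[OF clT] clinear_op_simps[OF clT'] lT ii_diff ii_add
        cscale_scaleR_right normal scaleR_diff_right scaleR_add_right algebra_simps)
  moreover have "opB (opA x) = (1/4) *\<^sub>R ii (T' (T' x) - T (T x))"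
    by (simp add: opA_def opB_def clinear_op_simps[OF clT] clinear_op_simps[OF clT'] lT ii_diff ii_add
        cscale_scaleR_right normal scaleR_diff_right scaleR_add_right algebra_simps)
  ultimately show ?thesis by simp
qed

lemma opAB_cpt:
  assumes "\<forall>n::nat. norm (x n) \<le> 1"
  shows "\<exists>r l. strict_mono r \<and> (\<lambda>n. opA (x (r n))) \<longlonglongrightarrow> l"
    and "\<exists>r l. strict_mono r \<and> (\<lambda>n. opB (x (r n))) \<longlonglongrightarrow> l"
proof -
  obtain r a b where r: "strict_mono r" "(\<lambda>n. T (x (r n))) \<longlonglongrightarrow> a" "(\<lambda>n. T' (x (r n))) \<longlonglongrightarrow> b"
    using cpt_TT'[OF assms] unfolding convergent_def by blast
  have "(\<lambda>n. opA (x (r n))) \<longlonglongrightarrow> (1/2) *\<^sub>R (a + b)"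
    unfolding opA_def using r by (intro tendsto_intros)
  then show "\<exists>r l. strict_mono r \<and> (\<lambda>n. opA (x (r n))) \<longlonglongrightarrow> l" using r(1) by blast
  have "(\<lambda>n. opB (x (r n))) \<longlonglongrightarrow> (1/2) *\<^sub>R ii (b - a)"
    unfolding opB_def using r by (intro tendsto_intros)
  then show "\<exists>r l. strict_mono r \<and> (\<lambda>n. opB (x (r n))) \<longlonglongrightarrow> l" using r(1) by blast
qed

lemma joint_eig:
  assumes X: "closed_csubspace X" and invT: "\<And>x. x \<in> X \<Longrightarrow> T x \<in> X"
    and invT': "\<And>x. x \<in> X \<Longrightarrow> T' x \<in> X" and x0: "x0 \<in> X" "x0 \<noteq> 0"
  shows "\<exists>e\<in>X. e \<noteq> 0 \<and> (\<exists>\<mu>. T e = cscale \<mu> e)"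
proof -
  have clX: "closed X" and csX: "csubspace X" and subX: "subspace X"
    using X csubspace_subspace by (auto simp: closed_csubspace_def)
  have invA: "opA x \<in> X" if "x \<in> X" for x
    unfolding opA_def by (intro csubspace_scaleR[OF csX] csubspace_add[OF csX] invT invT' that)
  have invB: "opB x \<in> X" if "x \<in> X" for x
    unfolding opB_def
    by (intro csubspace_scaleR[OF csX] csubspace_cscale[OF csX] csubspace_diff[OF csX] invT invT' that)
  obtain e1 a where e1: "e1 \<in> X" "e1 \<noteq> 0" "opA e1 = a *\<^sub>R e1"
    using sa_eigen[OF opA_bl opA_sym opAB_cpt(1) clX subX invA x0] by blast
  interpret A: bounded_linear opA by (rule opA_bl)
  interpret B: bounded_linear opB by (rule opB_bl)
  define Y where "Y = X \<inter> {x. opA x = a *\<^sub>R x}"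
  have clY: "closed Y" unfolding Y_def
    by (intro closed_Int clX closed_Collect_eq) (auto intro: A.continuous_on continuous_intros)
  have subY: "subspace Y" unfolding Y_def
    using subX by (auto simp: subspace_def A.add A.scaleR algebra_simps)
  have invY: "opB x \<in> Y" if "x \<in> Y" for x
  proof -
    have "opA (opB x) = a *\<^sub>R opB x" using that by (simp add: Y_def opAB_comm B.scaleR)
    then show ?thesis using that invB Y_def by blast
  qed
  obtain e b where e: "e \<in> Y" "e \<noteq> 0" "opB e = b *\<^sub>R e"
    using sa_eigen[OF opB_bl opB_sym opAB_cpt(2) clY subY invY, of e1] e1 Y_def by blast
  have "T e = cscale (Complex a b) e"
    using e Y_def by (simp add: T_decomp cscale_Complex cscale_scaleR_right)
  then show ?thesis using e Y_def by blast
qed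

lemma E1_closed: "closed_csubspace (E1 V1 V2)"
proof -
  have z: "closed_csubspace {0::'a}" by (simp add: closed_csubspace_def csubspace_def)
  have "E1 V1 V2 = {x. A1 x \<in> {0}} \<inter> {x. A2 x \<in> {0}}" by (auto simp: E1_eq)
  then show ?thesis
    using closed_csubspace_Int closed_csubspace_vimage[OF clA1 z] closed_csubspace_vimage[OF clA2 z] by simp
qed

definition Fam :: "'a set set" where
  "Fam = {F. F \<subseteq> E1 V1 V2 \<and> (\<forall>f\<in>F. norm f = 1) \<and> (\<forall>f\<in>F. \<forall>g\<in>F. f \<noteq> g \<longrightarrow> cinner f g = 0)
     \<and> (\<forall>f\<in>F. \<exists>\<mu>. T f = cscale \<mu> f)}"

lemma Fam_chain: "\<forall>C\<in>chains Fam. \<Union>C \<in> Fam"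
proof
  fix C assume C: "C \<in> chains Fam"
  then have CF: "C \<subseteq> Fam" and ch: "\<And>X Y. X \<in> C \<Longrightarrow> Y \<in> C \<Longrightarrow> X \<subseteq> Y \<or> Y \<subseteq> X"
    by (auto simp: chains_def chain_subset_def)
  have orth: "cinner f g = 0" if fg: "f \<in> \<Union>C" "g \<in> \<Union>C" "f \<noteq> g" for f g
  proof -
    obtain X Y where XY: "X \<in> C" "Y \<in> C" "f \<in> X" "g \<in> Y" using fg by blast
    then have "X \<subseteq> Y \<or> Y \<subseteq> X" using ch by blast
    then show ?thesis
    proof
      assume "X \<subseteq> Y" then show ?thesis using XY CF fg(3) by (auto simp: Fam_def)
    next
      assume "Y \<subseteq> X" then show ?thesis using XY CF fg(3) by (auto simp: Fam_def)
    qed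
  qed
  have mem: "X \<subseteq> E1 V1 V2 \<and> (\<forall>f\<in>X. norm f = 1) \<and> (\<forall>f\<in>X. \<exists>\<mu>. T f = cscale \<mu> f)" if "X \<in> C" for X
  proof -
    have "X \<in> Fam" using CF that by (rule subsetD)
    then show ?thesis by (simp add: Fam_def)
  qed
  have "\<Union>C \<subseteq> E1 V1 V2" using mem by blast
  moreover have "\<forall>f\<in>\<Union>C. norm f = 1" using mem by blast
  moreover have "\<forall>f\<in>\<Union>C. \<exists>\<mu>. T f = cscale \<mu> f" using mem by blast
  moreover have "\<forall>f\<in>\<Union>C. \<forall>g\<in>\<Union>C. f \<noteq> g \<longrightarrow> cinner f g = 0" using orth by blast
  ultimately show "\<Union>C \<in> Fam" unfolding Fam_def by (intro CollectI conjI)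
qed

lemma F_exists: "\<exists>F. orthonormal_basis_of F (E1 V1 V2) \<and> (\<forall>f\<in>F. \<exists>\<mu>. T f = cscale \<mu> f)"
proof -
  obtain F where F: "F \<in> Fam" and maxF: "\<And>X. X \<in> Fam \<Longrightarrow> F \<subseteq> X \<Longrightarrow> X = F"
    using Zorn_Lemma[OF Fam_chain] by blast
  have FE: "F \<subseteq> E1 V1 V2" and Fn: "\<And>f. f \<in> F \<Longrightarrow> norm f = 1"
    and Fo: "\<And>f g. f \<in> F \<Longrightarrow> g \<in> F \<Longrightarrow> f \<noteq> g \<Longrightarrow> cinner f g = 0"
    and Fe: "\<And>f. f \<in> F \<Longrightarrow> \<exists>\<mu>. T f = cscale \<mu> f"
    using F by (auto simp: Fam_def)
  define M where "M = closure (cspan F)"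
  have Mcs: "closed_csubspace M" unfolding M_def by (rule closed_csubspace_ccspan)
  have ME: "M \<subseteq> E1 V1 V2" unfolding M_def by (rule ccspan_minimal[OF E1_closed FE])
  have "E1 V1 V2 \<subseteq> M"
  proof (rule ccontr)
    assume "\<not> E1 V1 V2 \<subseteq> M"
    then obtain x where x: "x \<in> E1 V1 V2" "x \<notin> M" by blast
    obtain p q where pq: "x = p + q" "p \<in> M" "q \<in> orth_compl M" using proj_decomp[OF Mcs] by blast
    have q0: "q \<noteq> 0" using pq x by auto
    have E1cs: "csubspace (E1 V1 V2)" using E1_closed by (simp add: closed_csubspace_def)
    have qE: "q \<in> E1 V1 V2"
    proof -
      have "q = x - p" using pq by simp
      then show ?thesis using x(1) pq(2) ME csubspace_diff[OF E1cs] by blast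
    qed
    have qF: "q \<in> orth_compl F"
      using pq(3) orth_compl_antimono[OF ccspan_superset[of F]] M_def by blast
    define X where "X = E1 V1 V2 \<inter> orth_compl F"
    have Xcs: "closed_csubspace X" unfolding X_def
      by (rule closed_csubspace_Int[OF E1_closed orth_compl_closed_csubspace])
    have invT: "T y \<in> X" if "y \<in> X" for y
    proof -
      have "T y \<in> E1 V1 V2" by (simp add: E1_eq)
      moreover have "cinner (T y) f = 0" if fF: "f \<in> F" for f
      proof -
        obtain \<mu> where mu: "T f = cscale \<mu> f" using Fe[OF fF] by blast
        have "cinner (T y) f = cinner y (T' f)" by (rule adj_prop[OF clT])
        also have "\<dots> = \<mu> * cinner y f" by (simp add: eig_adj[OF mu] cinner_cscale_right)
        finally show ?thesis using \<open>y \<in> X\<close> fF by (simp add: X_def orth_compl_def)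
      qed
      ultimately show ?thesis by (simp add: X_def orth_compl_def)
    qed
    have invT': "T' y \<in> X" if "y \<in> X" for y
    proof -
      have "T' y \<in> E1 V1 V2" by (simp add: E1_eq)
      moreover have "cinner (T' y) f = 0" if fF: "f \<in> F" for f
      proof -
        obtain \<mu> where mu: "T f = cscale \<mu> f" using Fe[OF fF] by blast
        have "cinner (T' y) f = cinner y (T f)" using adj_prop2[OF clT, of y f] by simp
        also have "\<dots> = cnj \<mu> * cinner y f" by (simp add: mu cinner_cscale_right)
        finally show ?thesis using \<open>y \<in> X\<close> fF by (simp add: X_def orth_compl_def)
      qed
      ultimately show ?thesis by (simp add: X_def orth_compl_def)
    qed
    obtain e \<mu> where e: "e \<in> X" "e \<noteq> 0" "T e = cscale \<mu> e"
      using joint_eig[OF Xcs invT invT', of q] qE qF q0 X_def by blast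
    define e' where "e' = (1 / norm e) *\<^sub>R e"
    have ne': "norm e' = 1" using e(2) by (simp add: e'_def)
    have Xcs': "csubspace X" using Xcs by (simp add: closed_csubspace_def)
    have e'X: "e' \<in> X" unfolding e'_def by (rule csubspace_scaleR[OF Xcs' e(1)])
    have Te': "T e' = cscale \<mu> e'"
      by (simp add: e'_def clinear_op_simps(5)[OF clT] e(3) cscale_scaleR_right)
    define F' where "F' = insert e' F"
    have "F' \<in> Fam"
    proof -
      have "F' \<subseteq> E1 V1 V2" using FE e'X X_def F'_def by blast
      moreover have "\<forall>f\<in>F'. norm f = 1" using Fn ne' F'_def by blast
      moreover have "\<forall>f\<in>F'. \<forall>g\<in>F'. f \<noteq> g \<longrightarrow> cinner f g = 0"
      proof (intro ballI impI)
        fix f g assume fg: "f \<in> F'" "g \<in> F'" "f \<noteq> g"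
        have o1: "cinner e' h = 0" if "h \<in> F" for h using e'X that by (simp add: X_def orth_compl_def)
        have o2: "cinner h e' = 0" if "h \<in> F" for h
          using o1[OF that] cinner_commute[where x=e' and y=h] by simp
        show "cinner f g = 0" using fg o1 o2 Fo F'_def by auto
      qed
      moreover have "\<forall>f\<in>F'. \<exists>\<mu>. T f = cscale \<mu> f" using Fe Te' F'_def by blast
      ultimately show ?thesis by (simp add: Fam_def)
    qed
    then have "F' = F" using maxF F'_def by blast
    then have "e' \<in> F" using F'_def by blast
    moreover have "e' \<in> orth_compl F" using e'X X_def by blast
    ultimately have "e' = 0" using orth_compl_self by blast
    then show False using ne' by simp
  qed
  then have "M = E1 V1 V2" using ME by blast
  then have "orthonormal_basis_of F (E1 V1 V2)"
    unfolding orthonormal_basis_of_def M_def using FE Fn Fo by blast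
  then show ?thesis using Fe by blast
qed

end



lemma clinear_op_pow: "clinear_op L \<Longrightarrow> clinear_op (L ^^ m)"
  by (induction m) (auto intro: clinear_op_comp simp: clinear_op_id)

context cnp begin

definition Qm :: "nat \<Rightarrow> 'a \<Rightarrow> 'a" where "Qm m x = (V1 ^^ m) ((A1 ^^ m) x)"

lemma clQm: "clinear_op (Qm m)"
proof -
  have "Qm m = (V1 ^^ m) \<circ> (A1 ^^ m)" by (auto simp: Qm_def)
  then show ?thesis using clinear_op_comp clinear_op_pow cl1 clA1 by metis
qed

lemma cinner_pow: "cinner ((V1 ^^ m) u) y = cinner u ((A1 ^^ m) y)"
proof (induction m arbitrary: u y)
  case 0 then show ?case by simp
next
  case (Suc m)
  have "cinner ((V1 ^^ Suc m) u) y = cinner ((V1 ^^ m) u) (A1 y)"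
    by (simp add: adj_prop[OF cl1])
  also have "\<dots> = cinner u ((A1 ^^ m) (A1 y))" by (rule Suc)
  also have "\<dots> = cinner u ((A1 ^^ Suc m) y)" by (simp add: funpow_swap1)
  finally show ?case .
qed

lemma cinner_pow2: "cinner ((A1 ^^ m) u) y = cinner u ((V1 ^^ m) y)"
  by (metis cinner_commute cinner_pow)

lemma inner_pow2: "inner ((A1 ^^ m) u) y = inner u ((V1 ^^ m) y)"
  by (metis Re_cinner cinner_pow2)

lemma norm_V1pow[simp]: "norm ((V1 ^^ m) x) = norm x"
  by (induction m) (use iso1 in \<open>auto simp: is_isometry_def\<close>)

lemma A1pow_V1pow[simp]: "(A1 ^^ m) ((V1 ^^ m) x) = x"
  by (induction m arbitrary: x) (auto simp: funpow_swap1)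

lemma norm_Qm: "norm (Qm m x) = norm ((A1 ^^ m) x)"
  by (simp add: Qm_def)

lemma Qm_sym: "cinner (Qm m x) y = cinner x (Qm m y)"
  by (simp add: Qm_def cinner_pow cinner_pow2)

lemma Qm_sym_inner: "inner (Qm m x) y = inner x (Qm m y)"
  by (metis Qm_sym Re_cinner)

lemma QQ: "m \<le> n \<Longrightarrow> Qm m (Qm n x) = Qm n x"
proof -
  assume "m \<le> n"
  then obtain k where n: "n = m + k" using le_Suc_ex by blast
  have "(V1 ^^ n) y = (V1 ^^ m) ((V1 ^^ k) y)" for y by (simp add: n funpow_add)
  then show ?thesis by (simp add: Qm_def)
qed

lemma inner_Qm_self: "inner x (Qm n x) = (norm ((A1 ^^ n) x))^2"
  by (simp add: Qm_def inner_pow2[symmetric] power2_norm_eq_inner)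

lemma A1pow_dec: "norm ((A1 ^^ Suc n) x) \<le> norm ((A1 ^^ n) x)"
  using A1_contr by simp

lemma Qm_diff_sq:
  assumes "m \<le> n"
  shows "(norm (Qm m x - Qm n x))^2 = (norm ((A1 ^^ m) x))^2 - (norm ((A1 ^^ n) x))^2"
proof -
  have "inner (Qm m x) (Qm n x) = (norm ((A1 ^^ n) x))^2"
    by (simp add: Qm_sym_inner QQ[OF assms] inner_Qm_self)
  moreover have "inner (Qm m x) (Qm m x) = (norm ((A1 ^^ m) x))^2"
    by (simp add: Qm_sym_inner QQ inner_Qm_self)
  moreover have "inner (Qm n x) (Qm n x) = (norm ((A1 ^^ n) x))^2"
    by (simp add: Qm_sym_inner QQ inner_Qm_self)
  moreover have "(norm (Qm m x - Qm n x))^2 = inner (Qm m x) (Qm m x) - 2 * inner (Qm m x) (Qm n x) + inner (Qm n x) (Qm n x)"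
    by (simp add: power2_norm_eq_inner inner_diff_left inner_diff_right inner_commute)
  ultimately show ?thesis by simp
qed

lemma Qm_Cauchy: "Cauchy (\<lambda>m. Qm m x)"
proof -
  define a where "a n = (norm ((A1 ^^ n) x))^2" for n
  have "decseq a" unfolding a_def
    by (rule decseq_SucI) (simp add: A1pow_dec power_mono del: funpow.simps)
  then obtain L where L: "a \<longlonglongrightarrow> L" using decseq_convergent[of a 0] by (auto simp: a_def)
  then have Ca: "Cauchy a" by (rule LIMSEQ_imp_Cauchy)
  show ?thesis
  proof (rule metric_CauchyI)
    fix e :: real assume e: "e > 0"
    then obtain M where M: "\<And>m n. m \<ge> M \<Longrightarrow> n \<ge> M \<Longrightarrow> dist (a m) (a n) < e^2"
      using Ca unfolding Cauchy_def by (meson zero_less_power)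
    have "dist (Qm m x) (Qm n x) < e" if "m \<ge> M" "n \<ge> M" for m n
    proof -
      have sq: "(norm (Qm m x - Qm n x))^2 < e^2"
      proof (cases "m \<le> n")
        case True
        then have "(norm (Qm m x - Qm n x))^2 = a m - a n" by (simp add: Qm_diff_sq a_def)
        also have "\<dots> \<le> dist (a m) (a n)" by (simp add: dist_real_def)
        also have "\<dots> < e^2" using M that by blast
        finally show ?thesis .
      next
        case False
        then have "(norm (Qm n x - Qm m x))^2 = a n - a m" by (simp add: Qm_diff_sq a_def)
        also have "\<dots> \<le> dist (a m) (a n)" by (simp add: dist_real_def)
        also have "\<dots> < e^2" using M that by blast
        finally show ?thesis by (simp add: norm_minus_commute)
      qed
      then show ?thesis using e by (simp add: dist_norm power_less_imp_less_base)
    qed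
    then show "\<exists>M. \<forall>m\<ge>M. \<forall>n\<ge>M. dist (Qm m x) (Qm n x) < e" by blast
  qed
qed

definition Qi :: "'a \<Rightarrow> 'a" where "Qi x = lim (\<lambda>m. Qm m x)"

lemma Qi_lim: "(\<lambda>m. Qm m x) \<longlonglongrightarrow> Qi x"
  unfolding Qi_def using Qm_Cauchy Cauchy_convergent_iff convergent_LIMSEQ_iff by blast

lemma Qm_Qi: "Qm m (Qi x) = Qi x"
proof -
  have "(\<lambda>n. Qm m (Qm n x)) \<longlonglongrightarrow> Qm m (Qi x)" by (rule clinear_op_tendsto[OF clQm Qi_lim])
  moreover have "eventually (\<lambda>n. Qm m (Qm n x) = Qm n x) sequentially"
    using QQ eventually_sequentially by blast
  ultimately have "(\<lambda>n. Qm n x) \<longlonglongrightarrow> Qm m (Qi x)" by (rule Lim_transform_eventually)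
  then show ?thesis using Qi_lim LIMSEQ_unique by blast
qed

lemma Qi_Qi: "Qi (Qi x) = Qi x"
  using Qi_lim[of "Qi x"] by (simp add: Qm_Qi LIMSEQ_const_iff)

lemma Qi_add: "Qi (x + y) = Qi x + Qi y"
proof -
  have "(\<lambda>m. Qm m x + Qm m y) \<longlonglongrightarrow> Qi x + Qi y" by (intro tendsto_intros Qi_lim)
  then have "(\<lambda>m. Qm m (x + y)) \<longlonglongrightarrow> Qi x + Qi y" by (simp add: clinear_op_simps(1)[OF clQm])
  then show ?thesis using Qi_lim LIMSEQ_unique by blast
qed

lemma Qi_cscale: "Qi (cscale c x) = cscale c (Qi x)"
proof -
  have "(\<lambda>m. cscale c (Qm m x)) \<longlonglongrightarrow> cscale c (Qi x)" by (intro tendsto_intros Qi_lim)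
  then have "(\<lambda>m. Qm m (cscale c x)) \<longlonglongrightarrow> cscale c (Qi x)" by (simp add: clinear_op_simps(6)[OF clQm])
  then show ?thesis using Qi_lim LIMSEQ_unique by blast
qed

lemma Qi_norm: "norm (Qi x) \<le> norm x"
proof -
  have "(\<lambda>m. norm (Qm m x)) \<longlonglongrightarrow> norm (Qi x)" by (intro tendsto_intros Qi_lim)
  moreover have "norm (Qm m x) \<le> norm x" for m
  proof (induction m)
    case 0 then show ?case by (simp add: Qm_def)
  next
    case (Suc m)
    then show ?case using A1pow_dec[of m x] by (simp add: norm_Qm del: funpow.simps)
  qed
  ultimately show ?thesis by (intro LIMSEQ_le_const2) auto
qed

lemma clQi: "clinear_op Qi"
proof -
  have "bounded_linear Qi"
    by (rule bounded_linear_intro[where K=1])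
      (auto simp: Qi_add Qi_norm Qi_cscale cscale_of_real[symmetric] simp del: cscale_of_real)
  then show ?thesis by (simp add: clinear_op_def Qi_cscale)
qed

lemma Qi_V1: "Qi (V1 x) = V1 (Qi x)"
proof -
  have "Qm (Suc m) (V1 x) = V1 (Qm m x)" for m
    by (simp add: Qm_def funpow_swap1[of A1 m] del: funpow.simps) (simp add: funpow_swap1)
  have a: "(\<lambda>m. Qm (Suc m) (V1 x)) \<longlonglongrightarrow> Qi (V1 x)" using LIMSEQ_Suc[OF Qi_lim] .
  have "(\<lambda>m. V1 (Qm m x)) \<longlonglongrightarrow> V1 (Qi x)" by (rule clinear_op_tendsto[OF cl1 Qi_lim])
  then show ?thesis using a \<open>\<And>m. Qm (Suc m) (V1 x) = V1 (Qm m x)\<close> LIMSEQ_unique by simp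
qed

lemma Qi_A1: "Qi (A1 x) = A1 (Qi x)"
proof -
  have eq: "A1 (Qm (Suc m) x) = Qm m (A1 x)" for m
    by (simp add: Qm_def funpow_swap1[of A1])
  have a: "(\<lambda>m. A1 (Qm (Suc m) x)) \<longlonglongrightarrow> A1 (Qi x)" by (rule clinear_op_tendsto[OF clA1 LIMSEQ_Suc[OF Qi_lim]])
  have "(\<lambda>m. Qm m (A1 x)) \<longlonglongrightarrow> Qi (A1 x)" by (rule Qi_lim)
  then show ?thesis using a eq LIMSEQ_unique by simp
qed

end



lemma clinear_op_diff: "clinear_op A \<Longrightarrow> clinear_op B \<Longrightarrow> clinear_op (\<lambda>x. A x - B x)"
  unfolding clinear_op_def by (auto intro: bounded_linear_sub simp: cscale_diff_right)

context cnp begin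

lemma A1pow_A2: "(A1 ^^ m) (A2 x) = A2 ((A1 ^^ m) x)"
  by (induction m) (auto simp: Acomm)

lemma A2_A1pow: "A2 ((A1 ^^ m) x) = (A1 ^^ m) (A2 x)"
  by (simp add: A1pow_A2)

lemma adjV_pow: "(adj (V1 \<circ> V2) ^^ m) x = (A1 ^^ m) ((A2 ^^ m) x)"
proof -
  have adjV: "adj (V1 \<circ> V2) = A2 \<circ> A1" using adj_comp cl1 cl2 by blast
  have "((A2 \<circ> A1) ^^ m) x = (A1 ^^ m) ((A2 ^^ m) x)"
  proof (induction m)
    case 0 then show ?case by simp
  next
    case (Suc m)
    have "((A2 \<circ> A1) ^^ Suc m) x = A2 (A1 ((A1 ^^ m) ((A2 ^^ m) x)))"
      by (simp only: funpow.simps(2) comp_apply Suc)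
    also have "\<dots> = A2 ((A1 ^^ Suc m) ((A2 ^^ m) x))" by simp
    also have "\<dots> = (A1 ^^ Suc m) (A2 ((A2 ^^ m) x))" by (rule A2_A1pow)
    also have "\<dots> = (A1 ^^ Suc m) ((A2 ^^ Suc m) x)" by simp
    finally show ?case .
  qed
  then show ?thesis by (simp only: adjV)
qed

context
  fixes K
  assumes redK: "reducing V1 V2 K"
    and TK: "\<And>x. x \<in> K \<Longrightarrow> T x = 0"
    and T'K: "\<And>x. x \<in> K \<Longrightarrow> T' x = 0"
    and E1K: "\<And>x. x \<in> K \<Longrightarrow> A1 x = 0 \<Longrightarrow> A2 x = 0 \<Longrightarrow> x = 0"
begin

lemma invK: "x \<in> K \<Longrightarrow> V1 x \<in> K" "x \<in> K \<Longrightarrow> V2 x \<in> K" "x \<in> K \<Longrightarrow> A1 x \<in> K" "x \<in> K \<Longrightarrow> A2 x \<in> K"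
  using redK by (auto simp: reducing_def)

lemma Kcs: "closed_csubspace K" "csubspace K" "closed K"
  using redK by (auto simp: reducing_def closed_csubspace_def)

lemma KA1pow: "x \<in> K \<Longrightarrow> (A1 ^^ m) x \<in> K"
  by (induction m) (auto simp: invK)

lemma KV1pow: "x \<in> K \<Longrightarrow> (V1 ^^ m) x \<in> K"
  by (induction m) (auto simp: invK)

lemma A1V2K: "y \<in> K \<Longrightarrow> A1 (V2 y) = V2 (A1 y)"
  by (simp add: A1V2 T'K)

lemma A2V1K: "y \<in> K \<Longrightarrow> A2 (V1 y) = V1 (A2 y)"
  by (simp add: A2V1 TK)

lemma A1pow_V2K: "x \<in> K \<Longrightarrow> (A1 ^^ m) (V2 x) = V2 ((A1 ^^ m) x)"
  by (induction m) (auto simp: A1V2K KA1pow)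

lemma V1pow_A2K: "z \<in> K \<Longrightarrow> (V1 ^^ m) (A2 z) = A2 ((V1 ^^ m) z)"
  by (induction m) (auto simp: A2V1K KV1pow)

lemma Qm_V2K: "x \<in> K \<Longrightarrow> Qm m (V2 x) = V2 (Qm m x)"
  by (simp add: Qm_def A1pow_V2K pow1_V2 del: funpow.simps)

lemma Qm_A2K: "x \<in> K \<Longrightarrow> Qm m (A2 x) = A2 (Qm m x)"
  by (simp add: Qm_def A1pow_A2 V1pow_A2K KA1pow del: funpow.simps)

lemma Qi_V2K: "x \<in> K \<Longrightarrow> Qi (V2 x) = V2 (Qi x)"
proof -
  assume x: "x \<in> K"
  have "(\<lambda>m. V2 (Qm m x)) \<longlonglongrightarrow> V2 (Qi x)" by (rule clinear_op_tendsto[OF cl2 Qi_lim])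
  then have "(\<lambda>m. Qm m (V2 x)) \<longlonglongrightarrow> V2 (Qi x)" using Qm_V2K[OF x] by simp
  then show ?thesis using Qi_lim LIMSEQ_unique by blast
qed

lemma Qi_A2K: "x \<in> K \<Longrightarrow> Qi (A2 x) = A2 (Qi x)"
proof -
  assume x: "x \<in> K"
  have "(\<lambda>m. A2 (Qm m x)) \<longlonglongrightarrow> A2 (Qi x)" by (rule clinear_op_tendsto[OF clA2 Qi_lim])
  then have "(\<lambda>m. Qm m (A2 x)) \<longlonglongrightarrow> A2 (Qi x)" using Qm_A2K[OF x] by simp
  then show ?thesis using Qi_lim LIMSEQ_unique by blast
qed

lemma QmK: "x \<in> K \<Longrightarrow> Qm m x \<in> K"
  by (simp add: Qm_def KA1pow KV1pow del: funpow.simps)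

lemma QiK: "x \<in> K \<Longrightarrow> Qi x \<in> K"
  using closed_sequentially[OF Kcs(3) _ Qi_lim] QmK by blast

definition Kus where "Kus = {x\<in>K. Qi x = x}"
definition Ksu where "Ksu = {x\<in>K. Qi x = 0}"

lemma Kus_cs: "closed_csubspace Kus"
proof -
  have z: "closed_csubspace {0::'a}" by (simp add: closed_csubspace_def csubspace_def)
  have "Kus = K \<inter> {x. (\<lambda>x. Qi x - x) x \<in> {0}}" by (auto simp: Kus_def)
  then show ?thesis
    using closed_csubspace_Int[OF Kcs(1) closed_csubspace_vimage[OF clinear_op_diff[OF clQi clinear_op_id[unfolded id_def]] z]]
    by simp
qed

lemma Ksu_cs: "closed_csubspace Ksu"
proof -
  have z: "closed_csubspace {0::'a}" by (simp add: closed_csubspace_def csubspace_def)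
  have "Ksu = K \<inter> {x. Qi x \<in> {0}}" by (auto simp: Ksu_def)
  then show ?thesis using closed_csubspace_Int[OF Kcs(1) closed_csubspace_vimage[OF clQi z]] by simp
qed

lemma Kus_red: "reducing V1 V2 Kus"
  unfolding reducing_def using Kus_cs
  by (auto simp: Kus_def invK Qi_V1 Qi_A1 Qi_V2K Qi_A2K)

lemma Ksu_red: "reducing V1 V2 Ksu"
  unfolding reducing_def using Ksu_cs
  by (auto simp: Ksu_def invK Qi_V1 Qi_A1 Qi_V2K Qi_A2K clinear_op_simps(4)[OF cl1]
      clinear_op_simps(4)[OF cl2] clinear_op_simps(4)[OF clA1] clinear_op_simps(4)[OF clA2])

lemma Ks_orth: "x \<in> Kus \<Longrightarrow> y \<in> Ksu \<Longrightarrow> cinner x y = 0"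
proof -
  assume x: "x \<in> Kus" and y: "y \<in> Ksu"
  have "(\<lambda>m. cinner (Qm m x) y) \<longlonglongrightarrow> cinner (Qi x) y" by (rule tendsto_cinner_left[OF Qi_lim])
  moreover have "(\<lambda>m. cinner (Qm m x) y) \<longlonglongrightarrow> cinner x (Qi y)"
    unfolding Qm_sym by (rule tendsto_cinner_right[OF Qi_lim])
  ultimately have "cinner (Qi x) y = cinner x (Qi y)" using LIMSEQ_unique by blast
  then show ?thesis using x y by (simp add: Kus_def Ksu_def)
qed

lemma K_decomp: "K = {x + y | x y. x \<in> Kus \<and> y \<in> Ksu}"
proof (intro set_eqI iffI)
  fix x assume x: "x \<in> K"
  have "Qi x \<in> Kus" using x QiK Qi_Qi by (simp add: Kus_def)
  moreover have "x - Qi x \<in> Ksu"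
    using x QiK csubspace_diff[OF Kcs(2)] clinear_op_simps(2)[OF clQi] Qi_Qi by (simp add: Ksu_def)
  ultimately show "x \<in> {x + y | x y. x \<in> Kus \<and> y \<in> Ksu}" by force
next
  fix z assume "z \<in> {x + y | x y. x \<in> Kus \<and> y \<in> Ksu}"
  then obtain x y where "z = x + y" "x \<in> K" "y \<in> K" by (auto simp: Kus_def Ksu_def)
  then show "z \<in> K" using csubspace_add[OF Kcs(2)] by blast
qed

lemma Kus_norm_A1pow: "y \<in> Kus \<Longrightarrow> norm ((A1 ^^ m) y) = norm y"
proof -
  assume "y \<in> Kus"
  then have "Qi y = y" by (simp add: Kus_def)
  then have "Qm m y = y" using Qm_Qi[of m y] by simp
  then show ?thesis using norm_Qm[of m y] by simp
qed

lemma Kus_unitary: "unitary_on V1 Kus"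
  unfolding unitary_on_def
proof
  show "V1 ` Kus \<subseteq> Kus" using Kus_red by (auto simp: reducing_def)
  show "Kus \<subseteq> V1 ` Kus"
  proof
    fix x assume x: "x \<in> Kus"
    have "A1 x \<in> Kus" using Kus_red x by (auto simp: reducing_def)
    moreover have "V1 (A1 x) = x"
    proof -
      have "Qi x = x" using x by (simp add: Kus_def)
      then have "Qm 1 x = x" using Qm_Qi[of 1 x] by simp
      then show ?thesis by (simp add: Qm_def)
    qed
    ultimately show "x \<in> V1 ` Kus" by (metis imageI)
  qed
qed

lemma Kus_shift: "shift_on V2 Kus"
  unfolding shift_on_def
proof
  fix x assume x: "x \<in> Kus"
  have inKus: "(A2 ^^ m) x \<in> Kus" for m
    by (induction m) (use x Kus_red in \<open>auto simp: reducing_def\<close>)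
  have "norm ((A2 ^^ m) x) = norm ((adj (V1 \<circ> V2) ^^ m) x)" for m
    using Kus_norm_A1pow[OF inKus[of m], of m] by (simp add: adjV_pow)
  moreover have "(\<lambda>m. norm ((adj (V1 \<circ> V2) ^^ m) x)) \<longlonglongrightarrow> 0"
    using shift tendsto_norm_zero by blast
  ultimately have "(\<lambda>m. norm ((A2 ^^ m) x)) \<longlonglongrightarrow> 0" by simp
  then show "(\<lambda>m. (A2 ^^ m) x) \<longlonglongrightarrow> 0" by (simp add: tendsto_norm_zero_iff)
qed

lemma Ksu_shift: "shift_on V1 Ksu"
  unfolding shift_on_def
proof
  fix x assume x: "x \<in> Ksu"
  have "(\<lambda>m. norm (Qm m x)) \<longlonglongrightarrow> norm (Qi x)" by (intro tendsto_intros Qi_lim)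
  then have "(\<lambda>m. norm ((A1 ^^ m) x)) \<longlonglongrightarrow> 0" using x by (simp add: norm_Qm Ksu_def)
  then show "(\<lambda>m. (A1 ^^ m) x) \<longlonglongrightarrow> 0" by (simp add: tendsto_norm_zero_iff)
qed

lemma Ksu_unitary: "unitary_on V2 Ksu"
  unfolding unitary_on_def
proof
  show "V2 ` Ksu \<subseteq> Ksu" using Ksu_red by (auto simp: reducing_def)
  show "Ksu \<subseteq> V2 ` Ksu"
  proof
    fix x assume x: "x \<in> Ksu"
    have xK: "x \<in> K" and Qx: "Qi x = 0" using x by (auto simp: Ksu_def)
    have A2x: "A2 x \<in> Ksu" using Ksu_red x by (auto simp: reducing_def)
    define z where "z = x - V2 (A2 x)"
    have zK: "z \<in> K" unfolding z_def by (intro csubspace_diff[OF Kcs(2)] xK invK(2) invK(4))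
    have A2z: "A2 z = 0" by (simp add: z_def clinear_op_simps(2)[OF clA2])
    have Qz: "Qi z = 0"
      using xK invK Qx by (simp add: z_def clinear_op_simps(2)[OF clQi] Qi_V2K Qi_A2K
          clinear_op_simps(4)[OF clA2] clinear_op_simps(4)[OF cl2])
    have step: "Qm m z = Qm (Suc m) z" for m
    proof -
      define u where "u = (A1 ^^ m) z"
      have uK: "u \<in> K" unfolding u_def using zK by (rule KA1pow)
      define w where "w = u - V1 (A1 u)"
      have wK: "w \<in> K" unfolding w_def by (intro csubspace_diff[OF Kcs(2)] uK invK(1) invK(3))
      have "A1 w = 0" by (simp add: w_def clinear_op_simps(2)[OF clA1])
      moreover have "A2 w = 0"
      proof -
        have "A2 u = 0" by (simp add: u_def A2_A1pow A2z clinear_op_pow[OF clA1, THEN clinear_op_simps(4)])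
        moreover have "A2 (V1 (A1 u)) = V1 (A1 (A2 u))"
          using A2V1K[of "A1 u"] invK(3)[OF uK] by (simp add: Acomm)
        ultimately show ?thesis
          by (simp add: w_def clinear_op_simps(2)[OF clA2] clinear_op_simps(4)[OF clA1] clinear_op_simps(4)[OF cl1])
      qed
      ultimately have "w = 0" using E1K wK by blast
      then have "u = V1 (A1 u)" by (simp add: w_def)
      then have "(V1 ^^ m) u = (V1 ^^ m) (V1 (A1 u))" by simp
      moreover have "Qm (Suc m) z = (V1 ^^ m) (V1 (A1 u))"
        by (simp add: Qm_def u_def funpow_swap1[of V1])
      ultimately show ?thesis by (simp add: Qm_def u_def)
    qed
    have "Qm m z = z" for m
    proof (induction m)
      case 0 then show ?case by (simp add: Qm_def)
    next
      case (Suc m) then show ?case using step[of m] by simp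
    qed
    then have "Qi z = z" using Qi_lim[of z] by (simp add: LIMSEQ_const_iff)
    then have "z = 0" using Qz by simp
    then have "x = V2 (A2 x)" by (simp add: z_def)
    then show "x \<in> V2 ` Ksu" using A2x by (metis imageI)
  qed
qed

lemma Kus_sub: "Kus \<subseteq> K" and Ksu_sub: "Ksu \<subseteq> K" by (auto simp: Kus_def Ksu_def)

lemma wold: "shift_unitary_on V1 V2 K"
  unfolding shift_unitary_on_def
  apply (rule conjI)
   apply (use TK in blast)
  apply (rule exI[of _ Kus], rule exI[of _ Ksu])
  using Kus_red Ksu_red Kus_sub Ksu_sub Ks_orth K_decomp Kus_unitary Kus_shift Ksu_shift Ksu_unitary
  by blast

end

end



context cnp begin

lemma main:
  "\<exists>F. orthonormal_basis_of F (E1 V1 V2)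
     \<and> (\<forall>f\<in>F. \<exists>\<mu>. commut V1 V2 f = cscale \<mu> f)
     \<and> (let H0 = orth_compl (\<Union>f\<in>F. gen_subspace V1 V2 f) in
          (\<forall>f\<in>F. reducing V1 V2 (gen_subspace V1 V2 f))
        \<and> reducing V1 V2 H0
        \<and> (\<forall>f\<in>F. \<forall>g\<in>F. f \<noteq> g \<longrightarrow>
              (\<forall>x\<in>gen_subspace V1 V2 f. \<forall>y\<in>gen_subspace V1 V2 g. cinner x y = 0))
        \<and> closure (cspan (H0 \<union> (\<Union>f\<in>F. gen_subspace V1 V2 f))) = UNIV
        \<and> (\<forall>f\<in>F. irreducible_on V1 V2 (gen_subspace V1 V2 f))
        \<and> shift_unitary_on V1 V2 H0)"
proof -
  obtain F where F: "orthonormal_basis_of F (E1 V1 V2)" and Fe: "\<forall>f\<in>F. \<exists>\<mu>. T f = cscale \<mu> f"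
    using F_exists by blast
  have FE: "F \<subseteq> E1 V1 V2" and Fn: "\<And>f. f \<in> F \<Longrightarrow> norm f = 1"
    and Fo: "\<And>f g. f \<in> F \<Longrightarrow> g \<in> F \<Longrightarrow> f \<noteq> g \<Longrightarrow> cinner f g = 0"
    and Fspan: "closure (cspan F) = E1 V1 V2"
    using F by (auto simp: orthonormal_basis_of_def)
  have eig: "eigE f" if "f \<in> F" for f
    using that FE Fe by (auto simp: eigE_def E1_eq)
  define U where "U = (\<Union>f\<in>F. gen_subspace V1 V2 f)"
  define H0 where "H0 = orth_compl U"
  have Uinv: "V1 u \<in> U" "V2 u \<in> U" "A1 u \<in> U" "A2 u \<in> U" if uU: "u \<in> U" for u
  proof -
    obtain f where f: "f \<in> F" "u \<in> gen_subspace V1 V2 f" using uU by (auto simp: U_def)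
    note h = H_inv[OF eig[OF f(1)] f(2)]
    show "V1 u \<in> U" unfolding U_def using h(1) f(1) by (rule UN_I[rotated])
    show "V2 u \<in> U" unfolding U_def using h(2) f(1) by (rule UN_I[rotated])
    show "A1 u \<in> U" unfolding U_def using h(3) f(1) by (rule UN_I[rotated])
    show "A2 u \<in> U" unfolding U_def using h(4) f(1) by (rule UN_I[rotated])
  qed
  have red_f: "\<forall>f\<in>F. reducing V1 V2 (gen_subspace V1 V2 f)" using H_reducing eig by blast
  have H0cs: "closed_csubspace H0" unfolding H0_def by (rule orth_compl_closed_csubspace)
  have H0inv: "V1 x \<in> H0" "V2 x \<in> H0" "A1 x \<in> H0" "A2 x \<in> H0" if x: "x \<in> H0" for x
  proof -
    have x0: "\<And>u. u \<in> U \<Longrightarrow> cinner x u = 0" using x by (simp add: H0_def orth_compl_def)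
    show "V1 x \<in> H0" unfolding H0_def orth_compl_def using x0 Uinv(3) by (simp add: adj_prop[OF cl1])
    show "V2 x \<in> H0" unfolding H0_def orth_compl_def using x0 Uinv(4) by (simp add: adj_prop[OF cl2])
    show "A1 x \<in> H0" unfolding H0_def orth_compl_def
    proof (intro CollectI ballI)
      fix u assume "u \<in> U"
      then show "cinner (A1 x) u = 0" using x0 Uinv(1) adj_prop2[OF cl1, of x u] by simp
    qed
    show "A2 x \<in> H0" unfolding H0_def orth_compl_def
    proof (intro CollectI ballI)
      fix u assume "u \<in> U"
      then show "cinner (A2 x) u = 0" using x0 Uinv(2) adj_prop2[OF cl2, of x u] by simp
    qed
  qed
  have redH0: "reducing V1 V2 H0" unfolding reducing_def using H0cs H0inv by blast
  have orth: "\<forall>f\<in>F. \<forall>g\<in>F. f \<noteq> g \<longrightarrow>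
              (\<forall>x\<in>gen_subspace V1 V2 f. \<forall>y\<in>gen_subspace V1 V2 g. cinner x y = 0)"
  proof (intro ballI impI)
    fix f g x y assume fg: "f \<in> F" "g \<in> F" "f \<noteq> g" and xy: "x \<in> gen_subspace V1 V2 f" "y \<in> gen_subspace V1 V2 g"
    have "gen_subspace V1 V2 f \<subseteq> orth_compl (gen_subspace V1 V2 g)"
      using H_orth[OF eig[OF fg(2)] eig[OF fg(1)] Fo[OF fg(2,1)]] fg(3) by blast
    then show "cinner x y = 0" using xy by (auto simp: orth_compl_def)
  qed
  have span: "closure (cspan (H0 \<union> U)) = UNIV"
  proof -
    define M where "M = closure (cspan U)"
    have Mcs: "closed_csubspace M" unfolding M_def by (rule closed_csubspace_ccspan)
    have "x \<in> closure (cspan (H0 \<union> U))" for x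
    proof -
      obtain p q where pq: "x = p + q" "p \<in> M" "q \<in> orth_compl M" using proj_decomp[OF Mcs] by blast
      have "q \<in> H0" using pq(3) unfolding M_def H0_def orth_compl_ccspan_eq .
      then have q: "q \<in> closure (cspan (H0 \<union> U))" using ccspan_superset by blast
      have "p \<in> closure (cspan (H0 \<union> U))" using pq(2) ccspan_mono[of U "H0 \<union> U"] M_def by blast
      then show ?thesis using q pq(1) closed_csubspace_ccspan[of "H0 \<union> U"]
        by (simp add: closed_csubspace_def csubspace_add)
    qed
    then show ?thesis by blast
  qed
  have irr: "\<forall>f\<in>F. irreducible_on V1 V2 (gen_subspace V1 V2 f)" using H_irreducible eig Fn by blast
  have FU: "F \<subseteq> U" using f_in_H by (auto simp: U_def)
  have H0E: "H0 \<subseteq> orth_compl (E1 V1 V2)"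
  proof -
    have "H0 \<subseteq> orth_compl F" unfolding H0_def by (rule orth_compl_antimono[OF FU])
    then show ?thesis using orth_compl_ccspan_eq[of F] Fspan by simp
  qed
  have TH0: "T x = 0" "T' x = 0" if "x \<in> H0" for x
    using T_orth[of x] H0E that by (auto simp: orth_compl_def)
  have E1H0: "x = 0" if "x \<in> H0" "A1 x = 0" "A2 x = 0" for x
  proof -
    have "x \<in> E1 V1 V2" using that by (simp add: E1_eq)
    then show ?thesis using H0E that(1) orth_compl_self by blast
  qed
  have su: "shift_unitary_on V1 V2 H0"
    by (rule wold[OF redH0]) (use TH0 E1H0 in auto)
  show ?thesis
    unfolding Let_def
    using F Fe red_f redH0 orth span irr su by (simp only: H0_def U_def) blast
qed

end


theorem theorem8p9:
  fixes V1 V2 :: "'a::chilbert_space \<Rightarrow> 'a"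
  assumes "compact_normal_pair V1 V2"
  shows "\<exists>F. orthonormal_basis_of F (E1 V1 V2)
     \<and> (\<forall>f\<in>F. \<exists>\<mu>. commut V1 V2 f = cscale \<mu> f)
     \<and> (let H0 = orth_compl (\<Union>f\<in>F. gen_subspace V1 V2 f) in
          (\<forall>f\<in>F. reducing V1 V2 (gen_subspace V1 V2 f))
        \<and> reducing V1 V2 H0
        \<and> (\<forall>f\<in>F. \<forall>g\<in>F. f \<noteq> g \<longrightarrow>
              (\<forall>x\<in>gen_subspace V1 V2 f. \<forall>y\<in>gen_subspace V1 V2 g. cinner x y = 0))
        \<and> closure (cspan (H0 \<union> (\<Union>f\<in>F. gen_subspace V1 V2 f))) = UNIV
        \<and> (\<forall>f\<in>F. irreducible_on V1 V2 (gen_subspace V1 V2 f))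
        \<and> shift_unitary_on V1 V2 H0)"
    using cnp.main[OF cnp.intro[OF assms]] .

end
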